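(* Suppose SMA-DP-SGD (setting below) is run for $T$ private steps $t=0,\dots,T-1$. Let $\varepsilon_{\mathrm{SGM}}(\lambda_{\mathrm R};q,\sigma)$ denote any valid Rényi-DP upper bound at order $\lambda_{\mathrm R}>1$ for the Poisson-subsampled Gaussian mechanism with subsampling probability $q$ and noise-to-sensitivity ratio $\sigma$, and let $\sigma_{\mathrm{eff},t}=\left[\beta\left(\sum_{g=1}^G\sigma_{t,g}^{-2}\right)^{1/2}\right]^{-1}$. Then for every $\lambda_{\mathrm R}>1$ the full release history $(\tilde s_0,\dots,\tilde s_{T-1})$ satisfies $(\lambda_{\mathrm R},\varepsilon_{\mathrm{tot}}(\lambda_{\mathrm R}))$-RDP, where $$\varepsilon_{\mathrm{tot}}(\lambda_{\mathrm R})=\sum_{t=0}^{T-1}\varepsilon_{\mathrm{SGM}}\left(\lambda_{\mathrm R};q_t,\sigma_{\mathrm{eff},t}\right).$$ Consequently, for any $\delta\in(0,1)$, SMA-DP-SGD satisfies $(\varepsilon_\delta,\delta)$-DP with $$\varepsilon_\delta=\inf_{\lambda_{\mathrm R}>1}\left\{\varepsilon_{\mathrm{tot}}(\lambda_{\mathrm R})+\frac{\log(1/\delta)}{\lambda_{\mathrm R}-1}\right\}.$$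
   Context: SMA-DP-SGD setting: dataset $D=\{x_1,\dots,x_N\}$; adjacency is add/remove of one example. Parameters are partitioned into groups $g=1,\dots,G$ (dimension $d_g$, identity $I_g$), with clipping norms $C^{(g)}>0$, noise multipliers $\sigma_{t,g}>0$, and fixed mixing coefficient $\beta\in(0,1]$. At each step $t$, a fresh Poisson mask $m_t$ with $m_{t,i}\sim\mathrm{Bernoulli}(q_t)$ independently is drawn and shared by all groups; $s_t^{(g)}(D;m_t)=\sum_i m_{t,i}\bar g_t^{(g)}(x_i)$ where $\bar g_t^{(g)}(x_i)=g_t^{(g)}(x_i)/\max(1,\|g_t^{(g)}(x_i)\|_2/C^{(g)})$ is the clipped per-example gradient of group $g$ at the current model $\theta_t$. The group query is $r_t^{(g)}=\beta s_t^{(g)}(D;m_t)+b_t^{(g)}(\mathcal H_t)$, where the memory branch $b_t^{(g)}$ is a deterministic function of the global prior private release history $\mathcal H_t=(\tilde s_0,\dots,\tilde s_{t-1})$, the model state induced by it, and public hyperparameters, independent of the current data. The release is $\tilde s_t=(\tilde s_t^{(1)},\dots,\tilde s_t^{(G)})=r_t+Z_t$ with fresh $Z_t\sim\mathcal N(0,\operatorname{diag}(\sigma_{t,1}^2(C^{(1)})^2I_1,\ldots,\sigma_{t,G}^2(C^{(G)})^2I_G))$; the model is then updated from $\tilde s_t$ and $\tilde s_t$ is appended to the history. *)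

theory Defs
  imports "HOL-Probability.Probability"
begin

definition remove_nth :: "nat \<Rightarrow> 'x list \<Rightarrow> 'x list" where
  "remove_nth i xs = take i xs @ drop (Suc i) xs"

definition adjacent :: "'x list \<Rightarrow> 'x list \<Rightarrow> bool" where
  "adjacent D D' \<longleftrightarrow>
     (\<exists>i<length D. D' = remove_nth i D) \<or> (\<exists>i<length D'. D = remove_nth i D')"

definition renyi_div :: "real \<Rightarrow> 'a measure \<Rightarrow> 'a measure \<Rightarrow> ereal" where
  "renyi_div a P Q =
    (let I = (\<integral>\<^sup>+ x. ennreal (enn2real (RN_deriv Q P x) powr a) \<partial>Q) in
     if sets P = sets Q \<and> absolutely_continuous Q P \<and> I < \<infinity>
     then ereal (ln (enn2real I) / (a - 1)) else \<infinity>)"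

definition rdp :: "real \<Rightarrow> real \<Rightarrow> ('x list \<Rightarrow> 'a measure) \<Rightarrow> bool" where
  "rdp a eps M \<longleftrightarrow> (\<forall>D D'. adjacent D D' \<longrightarrow> renyi_div a (M D) (M D') \<le> ereal eps)"

definition dp :: "real \<Rightarrow> real \<Rightarrow> ('x list \<Rightarrow> 'a measure) \<Rightarrow> bool" where
  "dp eps delta M \<longleftrightarrow> (\<forall>D D'. adjacent D D' \<longrightarrow>
      (\<forall>A \<in> sets (M D). measure (M D) A \<le> exp eps * measure (M D') A + delta))"

text \<open>Parameter vectors are functions on a finite coordinate type 'd; coordinates are
  partitioned into groups via grp :: 'd => 'g.\<close>

definition vspace :: "('d::finite \<Rightarrow> real) measure" where
  "vspace = PiM UNIV (\<lambda>_. borel)"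

definition l2 :: "('d::finite \<Rightarrow> real) \<Rightarrow> real" where
  "l2 v = sqrt (\<Sum>j\<in>UNIV. (v j)\<^sup>2)"

definition gnorm :: "('d \<Rightarrow> 'g) \<Rightarrow> 'g \<Rightarrow> ('d::finite \<Rightarrow> real) \<Rightarrow> real" where
  "gnorm grp g v = sqrt (\<Sum>j\<in>{j. grp j = g}. (v j)\<^sup>2)"

definition clip :: "('d \<Rightarrow> 'g) \<Rightarrow> ('g \<Rightarrow> real) \<Rightarrow> ('d::finite \<Rightarrow> real) \<Rightarrow> ('d \<Rightarrow> real)" where
  "clip grp C v = (\<lambda>j. v j / max 1 (gnorm grp (grp j) v / C (grp j)))"

definition poisson_mask :: "real \<Rightarrow> nat \<Rightarrow> (nat \<Rightarrow> bool) measure" where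
  "poisson_mask q n = measure_pmf (Pi_pmf {..<n} False (\<lambda>_. bernoulli_pmf q))"

definition gauss_noise :: "('d::finite \<Rightarrow> real) \<Rightarrow> ('d \<Rightarrow> real) measure" where
  "gauss_noise s = PiM UNIV (\<lambda>j. density lborel (normal_density 0 (s j)))"

text \<open>Dataset entries are the (sensitivity <= 1) per-example contributions in R^d.\<close>
definition sgm :: "real \<Rightarrow> real \<Rightarrow> ('d::finite \<Rightarrow> real) list \<Rightarrow> ('d \<Rightarrow> real) measure" where
  "sgm q \<sigma> xs = distr (poisson_mask q (length xs) \<Otimes>\<^sub>M gauss_noise (\<lambda>_. \<sigma>)) vspace
     (\<lambda>(m, z) j. (\<Sum>i<length xs. if m i then (xs ! i) j else 0) + z j)"

definition valid_sgm_bound :: "'d::finite itself \<Rightarrow> (real \<Rightarrow> real \<Rightarrow> real \<Rightarrow> real) \<Rightarrow> bool" where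
  "valid_sgm_bound _ eps \<longleftrightarrow>
    (\<forall>a>1. \<forall>q\<in>{0..1}. \<forall>\<sigma>>0. \<forall>xs xs' :: ('d \<Rightarrow> real) list.
       adjacent xs xs' \<and> (\<forall>v \<in> set xs \<union> set xs'. l2 v \<le> 1) \<longrightarrow>
       renyi_div a (sgm q \<sigma> xs) (sgm q \<sigma> xs') \<le> ereal (eps a q \<sigma>))"

definition hspace :: "nat \<Rightarrow> (nat \<Rightarrow> 'd::finite \<Rightarrow> real) measure" where
  "hspace t = PiM {..<t} (\<lambda>_. vspace)"

text \<open>One step: shared Poisson mask, per-group clipping, mixing beta, memory branch b,
  independent Gaussian noise with std sigma_(t,g) C^(g) on the coordinates of group g.
  grad t h x is the per-example gradient at the model induced by history h.\<close>
definition sma_step ::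
  "('d \<Rightarrow> 'g) \<Rightarrow> ('g \<Rightarrow> real) \<Rightarrow> (nat \<Rightarrow> 'g \<Rightarrow> real) \<Rightarrow> real \<Rightarrow> (nat \<Rightarrow> real)
   \<Rightarrow> (nat \<Rightarrow> (nat \<Rightarrow> 'd \<Rightarrow> real) \<Rightarrow> 'x \<Rightarrow> ('d \<Rightarrow> real))
   \<Rightarrow> (nat \<Rightarrow> (nat \<Rightarrow> 'd \<Rightarrow> real) \<Rightarrow> ('d \<Rightarrow> real))
   \<Rightarrow> nat \<Rightarrow> 'x list \<Rightarrow> (nat \<Rightarrow> 'd::finite \<Rightarrow> real) \<Rightarrow> ('d \<Rightarrow> real) measure" where
  "sma_step grp C sig \<beta> q grad b t D h =
     distr (poisson_mask (q t) (length D) \<Otimes>\<^sub>M gauss_noise (\<lambda>j. sig t (grp j) * C (grp j))) vspace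
       (\<lambda>(m, z) j. \<beta> * (\<Sum>i<length D. if m i then clip grp C (grad t h (D ! i)) j else 0)
                   + b t h j + z j)"

fun sma_hist ::
  "('d \<Rightarrow> 'g) \<Rightarrow> ('g \<Rightarrow> real) \<Rightarrow> (nat \<Rightarrow> 'g \<Rightarrow> real) \<Rightarrow> real \<Rightarrow> (nat \<Rightarrow> real)
   \<Rightarrow> (nat \<Rightarrow> (nat \<Rightarrow> 'd \<Rightarrow> real) \<Rightarrow> 'x \<Rightarrow> ('d \<Rightarrow> real))
   \<Rightarrow> (nat \<Rightarrow> (nat \<Rightarrow> 'd \<Rightarrow> real) \<Rightarrow> ('d \<Rightarrow> real))
   \<Rightarrow> nat \<Rightarrow> 'x list \<Rightarrow> (nat \<Rightarrow> 'd::finite \<Rightarrow> real) measure" where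
  "sma_hist grp C sig \<beta> q grad b 0 D = return (hspace 0) (\<lambda>_. undefined)"
| "sma_hist grp C sig \<beta> q grad b (Suc t) D =
     sma_hist grp C sig \<beta> q grad b t D \<bind>
       (\<lambda>h. distr (sma_step grp C sig \<beta> q grad b t D h) (hspace (Suc t)) (\<lambda>s. h(t := s)))"

definition sigma_eff :: "real \<Rightarrow> ('g::finite \<Rightarrow> real) \<Rightarrow> real" where
  "sigma_eff \<beta> sg = 1 / (\<beta> * sqrt (\<Sum>g\<in>UNIV. 1 / (sg g)\<^sup>2))"

end

theory Submission
  imports Defs
begin

definition LD :: "('d::finite \<Rightarrow> real) measure" where
  "LD = PiM UNIV (\<lambda>_. lborel)"

lemma sets_LD: "sets (LD :: ('d::finite \<Rightarrow> real) measure) = sets vspace"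
  unfolding LD_def vspace_def by (rule sets_PiM_cong) auto

lemma space_LD: "space (LD :: ('d::finite \<Rightarrow> real) measure) = UNIV"
  unfolding LD_def by (simp add: space_PiM)

lemma space_vspace: "space (vspace :: ('d::finite \<Rightarrow> real) measure) = UNIV"
  unfolding vspace_def by (simp add: space_PiM)

lemma emeasure_normal_shift:
  assumes A: "A \<in> sets borel"
  shows "emeasure (density lborel (normal_density 0 s)) {z. c + z \<in> A}
       = emeasure (density lborel (normal_density c s)) A"
proof -
  have m: "{z. c + z \<in> A} \<in> sets borel" using A by measurable
  have 1: "emeasure (density lborel (normal_density c s)) A
      = (\<integral>\<^sup>+x. ennreal (normal_density c s x) * indicator A x \<partial>lborel)"
    using A by (intro emeasure_density) auto
  have 2: "(\<integral>\<^sup>+x. ennreal (normal_density c s x) * indicator A x \<partial>lborel) = ennreal \<bar>1\<bar> * (\<integral>\<^sup>+x. ennreal (normal_density c s (c + 1 * x)) * indicator A (c + 1 * x) \<partial>lborel)"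
  proof -
    have meas: "(\<lambda>x. ennreal (normal_density c s x) * indicator A x) \<in> borel_measurable borel"
      using A by measurable
    show ?thesis using nn_integral_real_affine[OF meas, where c=1 and t=c] by simp
  qed
  have e1: "\<And>x. normal_density c s (c + 1 * x) = normal_density 0 s x"
      unfolding normal_density_def by simp
  have e2: "\<And>x. indicator A (c + 1 * x) = (indicator {z. c + z \<in> A} x :: ennreal)"
      unfolding indicator_def by simp
  have 3: "ennreal \<bar>1\<bar> * (\<integral>\<^sup>+x. ennreal (normal_density c s (c + 1 * x)) * indicator A (c + 1 * x) \<partial>lborel) = (\<integral>\<^sup>+x. ennreal (normal_density 0 s x) * indicator {z. c + z \<in> A} x \<partial>lborel)"
    unfolding e1 e2 by simp
  have 4: "(\<integral>\<^sup>+x. ennreal (normal_density 0 s x) * indicator {z. c + z \<in> A} x \<partial>lborel) = emeasure (density lborel (normal_density 0 s)) {z. c + z \<in> A}"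
    using m by (intro emeasure_density[symmetric]) auto
  show ?thesis using 1 2 3 4 by simp
qed

interpretation LDprod: product_sigma_finite "\<lambda>_::'d. lborel :: real measure"
  by (auto simp: product_sigma_finite_def intro: lborel.sigma_finite_measure_axioms)

lemma sigma_finite_LD: "sigma_finite_measure (LD :: ('d::finite \<Rightarrow> real) measure)"
  unfolding LD_def by (rule LDprod.sigma_finite) simp

lemma density_PiM_prod:
  fixes f :: "'d::finite \<Rightarrow> real \<Rightarrow> real"
  assumes f: "\<And>j. f j \<in> borel_measurable borel" "\<And>j x. 0 \<le> f j x"
    and P: "\<And>j. prob_space (density lborel (f j))"
  shows "density LD (\<lambda>x. ennreal (\<Prod>j\<in>UNIV. f j (x j))) = PiM UNIV (\<lambda>j. density lborel (f j))"
proof -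
  interpret S: product_sigma_finite "\<lambda>j. density lborel (f j)"
    by (auto simp: product_sigma_finite_def intro!: prob_space_imp_sigma_finite P)
  show ?thesis
  proof (rule S.PiM_eqI)
    show "sets (density LD (\<lambda>x. ennreal (\<Prod>j\<in>UNIV. f j (x j)))) = sets (PiM UNIV (\<lambda>j. density lborel (f j)))"
      unfolding LD_def sets_density by (rule sets_PiM_cong) auto
    fix A assume A: "\<And>i. i \<in> (UNIV::'d set) \<Longrightarrow> A i \<in> sets (density lborel (f i))"
    have Ab: "\<And>i. A i \<in> sets borel" using A by simp
    have "Pi\<^sub>E UNIV A \<in> sets LD"
      unfolding LD_def using Ab by (intro sets_PiM_I_finite) auto
    then have "emeasure (density LD (\<lambda>x. ennreal (\<Prod>j\<in>UNIV. f j (x j)))) (Pi\<^sub>E UNIV A)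
        = (\<integral>\<^sup>+x. ennreal (\<Prod>j\<in>UNIV. f j (x j)) * indicator (Pi\<^sub>E UNIV A) x \<partial>LD)"
      using f by (subst emeasure_density) (auto simp: LD_def)
    also have "\<dots> = (\<integral>\<^sup>+x. (\<Prod>j\<in>UNIV. ennreal (f j (x j)) * indicator (A j) (x j)) \<partial>LD)"
      using f by (intro nn_integral_cong) (auto simp: prod.distrib indicator_def PiE_def Pi_def prod_ennreal)
    also have "\<dots> = (\<Prod>j\<in>UNIV. (\<integral>\<^sup>+y. ennreal (f j y) * indicator (A j) y \<partial>lborel))"
      unfolding LD_def using f Ab by (intro LDprod.product_nn_integral_prod) auto
    also have "\<dots> = (\<Prod>j\<in>UNIV. emeasure (density lborel (f j)) (A j))"
      using f Ab by (intro prod.cong refl) (simp add: emeasure_density)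
    finally show "emeasure (density LD (\<lambda>x. ennreal (\<Prod>j\<in>UNIV. f j (x j)))) (Pi\<^sub>E UNIV A) = (\<Prod>j\<in>UNIV. emeasure (density lborel (f j)) (A j))" .
  qed simp
qed

definition gdens :: "('d::finite \<Rightarrow> real) \<Rightarrow> ('d \<Rightarrow> real) \<Rightarrow> ('d \<Rightarrow> real) \<Rightarrow> real" where
  "gdens s c x = (\<Prod>j\<in>UNIV. normal_density (c j) (s j) (x j))"

lemma gauss_noise_sets: "sets (gauss_noise s) = sets vspace"
  unfolding gauss_noise_def vspace_def by (rule sets_PiM_cong) auto

lemma space_gauss_noise: "space (gauss_noise s) = UNIV"
  unfolding gauss_noise_def by (simp add: space_PiM)

lemma measurable_shift_vspace:
  "(\<lambda>z j. c j + z j) \<in> measurable (vspace :: ('d::finite \<Rightarrow> real) measure) vspace"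
  unfolding vspace_def
  by (rule measurable_PiM_single') measurable

lemma prob_space_gauss_noise: "(\<And>j. 0 < s j) \<Longrightarrow> prob_space (gauss_noise s)"
  unfolding gauss_noise_def
  apply (rule prob_space_PiM)
  apply (rule prob_space_normal_density)
  apply simp
  done

lemma gauss_shift:
  fixes s c :: "'d::finite \<Rightarrow> real"
  assumes s: "\<And>j. 0 < s j"
  shows "distr (gauss_noise s) vspace (\<lambda>z j. c j + z j) = density LD (\<lambda>x. ennreal (gdens s c x))"
proof -
  interpret S: product_sigma_finite "\<lambda>j. density lborel (normal_density (c j) (s j))"
    using s by (auto simp: product_sigma_finite_def intro!: prob_space_imp_sigma_finite prob_space_normal_density)
  interpret S0: product_sigma_finite "\<lambda>j. density lborel (normal_density 0 (s j))"
    using s by (auto simp: product_sigma_finite_def intro!: prob_space_imp_sigma_finite prob_space_normal_density)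
  have R: "density LD (\<lambda>x. ennreal (gdens s c x)) = PiM UNIV (\<lambda>j. density lborel (normal_density (c j) (s j)))"
    unfolding gdens_def using s by (intro density_PiM_prod) (auto intro: prob_space_normal_density)
  have meas: "(\<lambda>z j. c j + z j) \<in> measurable (gauss_noise s) vspace"
    using measurable_shift_vspace by (subst measurable_cong_sets[OF gauss_noise_sets refl])
  have L: "distr (gauss_noise s) vspace (\<lambda>z j. c j + z j) = PiM UNIV (\<lambda>j. density lborel (normal_density (c j) (s j)))"
  proof (rule S.PiM_eqI)
    show "sets (distr (gauss_noise s) vspace (\<lambda>z j. c j + z j)) = sets (PiM UNIV (\<lambda>j. density lborel (normal_density (c j) (s j))))"
      unfolding sets_distr vspace_def by (rule sets_PiM_cong) auto
    fix A assume A: "\<And>i. i \<in> (UNIV::'d set) \<Longrightarrow> A i \<in> sets (density lborel (normal_density (c i) (s i)))"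
    have Ab: "\<And>i. A i \<in> sets borel" using A by simp
    have PA: "Pi\<^sub>E UNIV A \<in> sets vspace"
      unfolding vspace_def using Ab by (intro sets_PiM_I_finite) auto
    have pre: "(\<lambda>z j. c j + z j) -` Pi\<^sub>E UNIV A \<inter> space (gauss_noise s) = Pi\<^sub>E UNIV (\<lambda>j. {z. c j + z \<in> A j})"
      by (auto simp: space_gauss_noise PiE_UNIV_domain Pi_iff)
    have "emeasure (distr (gauss_noise s) vspace (\<lambda>z j. c j + z j)) (Pi\<^sub>E UNIV A)
        = emeasure (gauss_noise s) (Pi\<^sub>E UNIV (\<lambda>j. {z. c j + z \<in> A j}))"
      using PA meas by (simp add: emeasure_distr pre)
    also have "\<dots> = (\<Prod>j\<in>UNIV. emeasure (density lborel (normal_density 0 (s j))) {z. c j + z \<in> A j})"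
      unfolding gauss_noise_def using Ab by (intro S0.emeasure_PiM) auto
    also have "\<dots> = (\<Prod>j\<in>UNIV. emeasure (density lborel (normal_density (c j) (s j))) (A j))"
      using Ab by (intro prod.cong refl emeasure_normal_shift) auto
    finally show "emeasure (distr (gauss_noise s) vspace (\<lambda>z j. c j + z j)) (Pi\<^sub>E UNIV A) = (\<Prod>j\<in>UNIV. emeasure (density lborel (normal_density (c j) (s j))) (A j))" .
  qed auto
  show ?thesis by (rule trans[OF L R[symmetric]])
qed

definition PM :: "real \<Rightarrow> nat \<Rightarrow> (nat \<Rightarrow> bool) pmf" where
  "PM q n = Pi_pmf {..<n} False (\<lambda>_. bernoulli_pmf q)"

lemma finite_set_PM: "finite (set_pmf (PM q n))"
proof -
  have "set_pmf (PM q n) \<subseteq> PiE_dflt {..<n} False (set_pmf \<circ> (\<lambda>_. bernoulli_pmf q))"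
    unfolding PM_def by (rule set_Pi_pmf_subset') simp
  moreover have "finite (PiE_dflt {..<n} False (set_pmf \<circ> (\<lambda>_. bernoulli_pmf q)))"
    by (intro finite_PiE_dflt) auto
  ultimately show ?thesis by (rule finite_subset)
qed

definition mixdens :: "real \<Rightarrow> nat \<Rightarrow> ('d::finite \<Rightarrow> real) \<Rightarrow> ((nat \<Rightarrow> bool) \<Rightarrow> 'd \<Rightarrow> real) \<Rightarrow> ('d \<Rightarrow> real) \<Rightarrow> real" where
  "mixdens q n s \<mu> x = (\<Sum>m\<in>set_pmf (PM q n). pmf (PM q n) m * gdens s (\<mu> m) x)"

lemma gdens_nonneg: "0 \<le> gdens s c x"
  unfolding gdens_def by (intro prod_nonneg) auto

lemma gdens_pos: "(\<And>j. 0 < s j) \<Longrightarrow> 0 < gdens s c x"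
  unfolding gdens_def by (intro prod_pos normal_density_pos) auto

lemma mixdens_nonneg: "0 \<le> mixdens q n s \<mu> x"
  unfolding mixdens_def by (intro sum_nonneg mult_nonneg_nonneg gdens_nonneg) auto

lemma mixdens_pos: "(\<And>j. 0 < s j) \<Longrightarrow> 0 < mixdens q n s \<mu> x"
  unfolding mixdens_def
proof -
  assume s: "\<And>j. 0 < s j"
  obtain m0 where m0: "m0 \<in> set_pmf (PM q n)" using set_pmf_not_empty[of "PM q n"] by blast
  have "0 < pmf (PM q n) m0 * gdens s (\<mu> m0) x"
    using m0 s by (intro mult_pos_pos gdens_pos) (auto simp: pmf_positive)
  also have "\<dots> \<le> (\<Sum>m\<in>set_pmf (PM q n). pmf (PM q n) m * gdens s (\<mu> m) x)"
    using m0 finite_set_PM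
    by (intro member_le_sum mult_nonneg_nonneg gdens_nonneg) auto
  finally show "0 < (\<Sum>m\<in>set_pmf (PM q n). pmf (PM q n) m * gdens s (\<mu> m) x)" .
qed

lemma gdens_meas[measurable]: "(\<lambda>x. gdens s c x) \<in> borel_measurable (vspace :: ('d::finite \<Rightarrow> real) measure)"
  unfolding gdens_def vspace_def by measurable

lemma measurable_mix_map:
  "(\<lambda>(m, z) j. \<mu> m j + z j) \<in> measurable (poisson_mask q n \<Otimes>\<^sub>M gauss_noise s) (vspace :: ('d::finite \<Rightarrow> real) measure)"
  unfolding vspace_def
proof (rule measurable_PiM_single')
  fix j :: 'd
  have 1: "(\<lambda>x. \<mu> (fst x) j) \<in> borel_measurable (poisson_mask q n \<Otimes>\<^sub>M gauss_noise s)"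
    by (rule measurable_compose[OF measurable_fst]) (simp add: poisson_mask_def)
  have 2: "(\<lambda>x. snd x j) \<in> borel_measurable (poisson_mask q n \<Otimes>\<^sub>M gauss_noise s)"
    by (rule measurable_compose[OF measurable_snd])
       (simp add: gauss_noise_def measurable_component_singleton)
  have "(\<lambda>x. \<mu> (fst x) j + snd x j) \<in> borel_measurable (poisson_mask q n \<Otimes>\<^sub>M gauss_noise s)"
    using 1 2 by (rule borel_measurable_add)
  then show "(\<lambda>x. (case x of (m, z) \<Rightarrow> \<lambda>j. \<mu> m j + z j) j) \<in> borel_measurable (poisson_mask q n \<Otimes>\<^sub>M gauss_noise s)"
    by (simp add: case_prod_beta')
qed (auto simp: space_PiM)

lemma mix_density:
  fixes s :: "'d::finite \<Rightarrow> real"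
  assumes s: "\<And>j. 0 < s j"
  shows "distr (poisson_mask q n \<Otimes>\<^sub>M gauss_noise s) vspace (\<lambda>(m, z) j. \<mu> m j + z j)
       = density LD (\<lambda>x. ennreal (mixdens q n s \<mu> x))"
proof (rule measure_eqI)
  show "sets (distr (poisson_mask q n \<Otimes>\<^sub>M gauss_noise s) vspace (\<lambda>(m, z) j. \<mu> m j + z j)) = sets (density LD (\<lambda>x. ennreal (mixdens q n s \<mu> x)))"
    by (simp add: sets_LD)
  fix A assume "A \<in> sets (distr (poisson_mask q n \<Otimes>\<^sub>M gauss_noise s) vspace (\<lambda>(m, z) j. \<mu> m j + z j))"
  then have A: "A \<in> sets vspace" by simp
  note A[measurable]
  have gm: "\<And>m. (\<lambda>x. ennreal (gdens s (\<mu> m) x) * indicator A x) \<in> borel_measurable LD"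
    unfolding measurable_cong_sets[OF sets_LD refl] by measurable
  have gm2: "\<And>m. (\<lambda>x. ennreal (pmf (PM q n) m * gdens s (\<mu> m) x) * indicator A x) \<in> borel_measurable LD"
    unfolding measurable_cong_sets[OF sets_LD refl] by measurable
  let ?F = "\<lambda>(m, z) j. \<mu> m j + z j :: real"
  let ?N = "gauss_noise s"
  interpret N: prob_space ?N by (rule prob_space_gauss_noise) (rule s)
  have FA: "?F -` A \<inter> space (poisson_mask q n \<Otimes>\<^sub>M ?N) \<in> sets (poisson_mask q n \<Otimes>\<^sub>M ?N)"
    using measurable_mix_map A by (rule measurable_sets)
  have "emeasure (distr (poisson_mask q n \<Otimes>\<^sub>M ?N) vspace ?F) A
      = emeasure (poisson_mask q n \<Otimes>\<^sub>M ?N) (?F -` A \<inter> space (poisson_mask q n \<Otimes>\<^sub>M ?N))"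
    using measurable_mix_map A by (rule emeasure_distr)
  also have "\<dots> = (\<integral>\<^sup>+m. emeasure ?N (Pair m -` (?F -` A \<inter> space (poisson_mask q n \<Otimes>\<^sub>M ?N))) \<partial>poisson_mask q n)"
    using FA by (rule N.emeasure_pair_measure_alt)
  also have "\<dots> = (\<integral>\<^sup>+m. (\<integral>\<^sup>+x. ennreal (gdens s (\<mu> m) x) * indicator A x \<partial>LD) \<partial>poisson_mask q n)"
  proof (rule nn_integral_cong)
    fix m
    have pre: "Pair m -` (?F -` A \<inter> space (poisson_mask q n \<Otimes>\<^sub>M ?N)) = (\<lambda>z j. \<mu> m j + z j) -` A \<inter> space ?N"
      by (auto simp: space_pair_measure poisson_mask_def)
    have "emeasure ?N ((\<lambda>z j. \<mu> m j + z j) -` A \<inter> space ?N) = emeasure (distr ?N vspace (\<lambda>z j. \<mu> m j + z j)) A"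
      using A measurable_shift_vspace[of "\<mu> m"]
      by (intro emeasure_distr[symmetric]) (auto simp: measurable_cong_sets[OF gauss_noise_sets refl])
    also have "\<dots> = emeasure (density LD (\<lambda>x. ennreal (gdens s (\<mu> m) x))) A"
      by (simp add: gauss_shift[OF s])
    also have "\<dots> = (\<integral>\<^sup>+x. ennreal (gdens s (\<mu> m) x) * indicator A x \<partial>LD)"
      using A by (intro emeasure_density) (auto simp: sets_LD measurable_cong_sets[OF sets_LD refl])
    finally show "emeasure ?N (Pair m -` (?F -` A \<inter> space (poisson_mask q n \<Otimes>\<^sub>M ?N))) = (\<integral>\<^sup>+x. ennreal (gdens s (\<mu> m) x) * indicator A x \<partial>LD)"
      by (simp only: pre)
  qed
  also have "\<dots> = (\<Sum>m\<in>set_pmf (PM q n). (\<integral>\<^sup>+x. ennreal (gdens s (\<mu> m) x) * indicator A x \<partial>LD) * pmf (PM q n) m)"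
    unfolding poisson_mask_def PM_def[symmetric] by (rule nn_integral_measure_pmf_finite[OF finite_set_PM]) simp
  also have "\<dots> = (\<Sum>m\<in>set_pmf (PM q n). (\<integral>\<^sup>+x. ennreal (pmf (PM q n) m * gdens s (\<mu> m) x) * indicator A x \<partial>LD))"
  proof (rule sum.cong[OF refl])
    fix m
    have "(\<integral>\<^sup>+x. ennreal (gdens s (\<mu> m) x) * indicator A x \<partial>LD) * pmf (PM q n) m
       = (\<integral>\<^sup>+x. ennreal (gdens s (\<mu> m) x) * indicator A x * ennreal (pmf (PM q n) m) \<partial>LD)"
      by (rule nn_integral_multc[symmetric]) (rule gm)
    also have "\<dots> = (\<integral>\<^sup>+x. ennreal (pmf (PM q n) m * gdens s (\<mu> m) x) * indicator A x \<partial>LD)"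
      by (intro nn_integral_cong) (simp add: ennreal_mult' gdens_nonneg mult_ac)
    finally show "(\<integral>\<^sup>+x. ennreal (gdens s (\<mu> m) x) * indicator A x \<partial>LD) * pmf (PM q n) m
       = (\<integral>\<^sup>+x. ennreal (pmf (PM q n) m * gdens s (\<mu> m) x) * indicator A x \<partial>LD)" .
  qed
  also have "\<dots> = (\<integral>\<^sup>+x. (\<Sum>m\<in>set_pmf (PM q n). ennreal (pmf (PM q n) m * gdens s (\<mu> m) x) * indicator A x) \<partial>LD)"
    by (rule nn_integral_sum[symmetric]) (rule gm2)
  also have "\<dots> = (\<integral>\<^sup>+x. ennreal (mixdens q n s \<mu> x) * indicator A x \<partial>LD)"
    unfolding mixdens_def
    by (intro nn_integral_cong) (simp add: sum_distrib_right[symmetric] sum_ennreal gdens_nonneg)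
  also have "\<dots> = emeasure (density LD (\<lambda>x. ennreal (mixdens q n s \<mu> x))) A"
    using A by (intro emeasure_density[symmetric]) (auto simp: sets_LD measurable_cong_sets[OF sets_LD refl] mixdens_def)
  finally show "emeasure (distr (poisson_mask q n \<Otimes>\<^sub>M gauss_noise s) vspace (\<lambda>(m, z) j. \<mu> m j + z j)) A = emeasure (density LD (\<lambda>x. ennreal (mixdens q n s \<mu> x))) A" .
qed

abbreviation renyi_int :: "real \<Rightarrow> 'a measure \<Rightarrow> 'a measure \<Rightarrow> ennreal" where
  "renyi_int a P Q \<equiv> (\<integral>\<^sup>+ x. ennreal (enn2real (RN_deriv Q P x) powr a) \<partial>Q)"

lemma renyi_bound_D:
  assumes R: "renyi_div a P Q \<le> ereal e" and a: "1 < a"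
  shows "sets P = sets Q" "absolutely_continuous Q P" "renyi_int a P Q \<le> ennreal (exp ((a - 1) * e))"
proof -
  let ?I = "renyi_int a P Q"
  have c: "sets P = sets Q \<and> absolutely_continuous Q P \<and> ?I < \<infinity>"
  proof (rule ccontr)
    assume "\<not> ?thesis"
    then have "renyi_div a P Q = \<infinity>" unfolding renyi_div_def Let_def by auto
    with R show False by simp
  qed
  then show "sets P = sets Q" "absolutely_continuous Q P" by auto
  have "renyi_div a P Q = ereal (ln (enn2real ?I) / (a - 1))"
    using c unfolding renyi_div_def Let_def by auto
  with R have le: "ln (enn2real ?I) / (a - 1) \<le> e" by simp
  show "?I \<le> ennreal (exp ((a - 1) * e))"
  proof (cases "enn2real ?I = 0")
    case True
    then have "?I = 0" using c by (auto simp: enn2real_eq_0_iff)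
    then show ?thesis by simp
  next
    case False
    then have pos: "0 < enn2real ?I" by (simp add: enn2real_nonneg order_le_neq_trans)
    have "ln (enn2real ?I) \<le> (a - 1) * e" using le a by (simp add: divide_le_eq mult.commute)
    then have "exp (ln (enn2real ?I)) \<le> exp ((a - 1) * e)" by simp
    then have "enn2real ?I \<le> exp ((a - 1) * e)" using pos by simp
    then have "ennreal (enn2real ?I) \<le> ennreal (exp ((a - 1) * e))" by (rule ennreal_leI)
    moreover have "ennreal (enn2real ?I) = ?I" using c by (simp add: less_top)
    ultimately show ?thesis by simp
  qed
qed

lemma renyi_bound_I:
  assumes s: "sets P = sets Q" and ac: "absolutely_continuous Q P"
    and I: "renyi_int a P Q \<le> ennreal (exp ((a - 1) * e))" and I0: "renyi_int a P Q \<noteq> 0"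
    and a: "1 < a"
  shows "renyi_div a P Q \<le> ereal e"
proof -
  let ?I = "renyi_int a P Q"
  have fin: "?I < \<infinity>" using I by (simp add: le_less_trans)
  then have "renyi_div a P Q = ereal (ln (enn2real ?I) / (a - 1))"
    using s ac unfolding renyi_div_def Let_def by auto
  moreover have pos: "0 < enn2real ?I"
    using fin I0 by (simp add: enn2real_positive_iff less_top[symmetric] zero_less_iff_neq_zero)
  moreover have "enn2real ?I \<le> exp ((a - 1) * e)"
    using I by (simp add: enn2real_leI)
  then have "ln (enn2real ?I) \<le> ln (exp ((a - 1) * e))" using pos by (subst ln_le_cancel_iff) auto
  then have "ln (enn2real ?I) \<le> (a - 1) * e" by simp
  then have "ln (enn2real ?I) / (a - 1) \<le> e" using a by (simp add: divide_le_eq mult.commute)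
  ultimately show ?thesis by simp
qed

lemma renyi_int_density:
  fixes f g :: "'a \<Rightarrow> real"
  assumes fm: "f \<in> borel_measurable L" and gm: "g \<in> borel_measurable L"
    and f0: "\<And>x. 0 \<le> f x" and g0: "\<And>x. 0 < g x"
    and Q: "prob_space (density L g)"
  shows "absolutely_continuous (density L g) (density L f)"
    and "renyi_int a (density L f) (density L g) = (\<integral>\<^sup>+ x. ennreal (g x * (f x / g x) powr a) \<partial>L)"
proof -
  let ?Q = "density L g"
  interpret Qp: prob_space ?Q by (rule Q)
  have hm: "(\<lambda>x. ennreal (f x / g x)) \<in> borel_measurable ?Q" using fm gm by simp
  have eq: "density ?Q (\<lambda>x. ennreal (f x / g x)) = density L f"
  proof -
    have "density ?Q (\<lambda>x. ennreal (f x / g x)) = density L (\<lambda>x. ennreal (g x) * ennreal (f x / g x))"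
      using fm gm by (intro density_density_eq) auto
    also have "\<dots> = density L f"
    proof (rule density_cong)
      show "(\<lambda>x. ennreal (g x) * ennreal (f x / g x)) \<in> borel_measurable L" using fm gm by simp
      show "(\<lambda>x. ennreal (f x)) \<in> borel_measurable L" using fm by simp
      have "\<And>x. ennreal (g x) * ennreal (f x / g x) = ennreal (f x)"
      proof -
        fix x
        have "g x * (f x / g x) = f x" using g0[of x] by simp
        then show "ennreal (g x) * ennreal (f x / g x) = ennreal (f x)"
          using g0[of x] by (simp add: ennreal_mult'[symmetric])
      qed
      then show "AE x in L. ennreal (g x) * ennreal (f x / g x) = ennreal (f x)" by simp
    qed
    finally show ?thesis .
  qed
  show "absolutely_continuous ?Q (density L f)"
    using absolutely_continuousI_density[OF hm] by (simp add: eq)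
  have ae: "AE x in ?Q. ennreal (f x / g x) = RN_deriv ?Q (density L f) x"
    using hm eq by (rule Qp.RN_deriv_unique)
  have "renyi_int a (density L f) ?Q = (\<integral>\<^sup>+ x. ennreal ((f x / g x) powr a) \<partial>?Q)"
  proof -
    have ae2: "AE x in ?Q. enn2real (RN_deriv ?Q (density L f) x) = f x / g x"
      using ae by eventually_elim (metis enn2real_ennreal divide_nonneg_pos f0 g0)
    show ?thesis using ae2 by (intro nn_integral_cong_AE) (auto elim!: eventually_mono)
  qed
  also have "\<dots> = (\<integral>\<^sup>+ x. ennreal (g x) * ennreal ((f x / g x) powr a) \<partial>L)"
    using fm gm by (intro nn_integral_density) auto
  also have "\<dots> = (\<integral>\<^sup>+ x. ennreal (g x * (f x / g x) powr a) \<partial>L)"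
    using g0 by (intro nn_integral_cong) (simp add: ennreal_mult'[symmetric] less_imp_le)
  finally show "renyi_int a (density L f) ?Q = (\<integral>\<^sup>+ x. ennreal (g x * (f x / g x) powr a) \<partial>L)" .
qed

lemma pointwise_conv:
  fixes r K a :: real
  assumes r: "0 \<le> r" and K: "0 < K" and a: "1 < a"
  shows "r \<le> K + K powr (1 - a) * r powr a"
proof (cases "r \<le> K")
  case True
  then show ?thesis using K r by (simp add: add_increasing2)
next
  case False
  then have rK: "K < r" by simp
  then have rpos: "0 < r" using K by simp
  have "r powr (1 - a) \<le> K powr (1 - a)"
    using a K rK by (intro powr_mono2') auto
  then have "r powr (1 - a) * r powr a \<le> K powr (1 - a) * r powr a"
    by (intro mult_right_mono) auto
  moreover have "r powr (1 - a) * r powr a = r"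
    using rpos by (simp add: powr_add[symmetric])
  ultimately show ?thesis using K by (smt (verit) powr_ge_zero mult_nonneg_nonneg)
qed

lemma rdp_to_dp:
  assumes P: "prob_space P" and Q: "prob_space Q"
    and R: "renyi_div a P Q \<le> ereal e" and a: "1 < a" and d: "0 < \<delta>"
    and A: "A \<in> sets P"
  shows "measure P A \<le> exp (e + ln (1 / \<delta>) / (a - 1)) * measure Q A + \<delta>"
proof -
  interpret P: prob_space P by (rule P)
  interpret Q: prob_space Q by (rule Q)
  note D = renyi_bound_D[OF R a]
  let ?K = "exp (e + ln (1 / \<delta>) / (a - 1))"
  let ?r = "\<lambda>x. enn2real (RN_deriv Q P x)"
  have K: "0 < ?K" by simp
  have AQ: "A \<in> sets Q" using A D(1) by simp
  have dens: "density Q (RN_deriv Q P) = P"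
    using D by (intro Q.density_RN_deriv) auto
  have fin: "AE x in Q. RN_deriv Q P x \<noteq> \<infinity>"
    using D by (intro Q.RN_deriv_finite) (auto intro: prob_space_imp_sigma_finite P)
  have "emeasure P A = emeasure (density Q (RN_deriv Q P)) A" by (simp add: dens)
  also have "\<dots> = (\<integral>\<^sup>+x. RN_deriv Q P x * indicator A x \<partial>Q)"
    using AQ by (intro emeasure_density) auto
  also have "\<dots> = (\<integral>\<^sup>+x. ennreal (?r x) * indicator A x \<partial>Q)"
    using fin by (intro nn_integral_cong_AE) (auto simp: ennreal_enn2real_if)
  also have "\<dots> \<le> (\<integral>\<^sup>+x. ennreal ?K * indicator A x + ennreal (?K powr (1 - a)) * ennreal (?r x powr a) \<partial>Q)"
  proof (rule nn_integral_mono)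
    fix x
    have "?r x \<le> ?K + ?K powr (1 - a) * ?r x powr a"
      using a by (intro pointwise_conv) (auto simp: enn2real_nonneg)
    then have "ennreal (?r x) \<le> ennreal ?K + ennreal (?K powr (1 - a)) * ennreal (?r x powr a)"
      by (simp add: ennreal_plus[symmetric] ennreal_mult'[symmetric] del: ennreal_plus)
    moreover have "ennreal (?r x) * 0 \<le> ennreal ?K * 0 + ennreal (?K powr (1 - a)) * ennreal (?r x powr a)"
      by simp
    ultimately show "ennreal (?r x) * indicator A x \<le> ennreal ?K * indicator A x + ennreal (?K powr (1 - a)) * ennreal (?r x powr a)"
      by (cases "x \<in> A") auto
  qed
  also have "\<dots> = ennreal ?K * emeasure Q A + ennreal (?K powr (1 - a)) * renyi_int a P Q"
    using AQ by (simp add: nn_integral_add nn_integral_cmult)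
  also have "\<dots> \<le> ennreal ?K * emeasure Q A + ennreal (?K powr (1 - a)) * ennreal (exp ((a - 1) * e))"
    using D(3) by (intro add_left_mono mult_left_mono) auto
  also have "?K powr (1 - a) * exp ((a - 1) * e) = \<delta>"
  proof -
    have "?K powr (1 - a) = exp ((1 - a) * (e + ln (1 / \<delta>) / (a - 1)))"
      by (simp add: powr_def)
    also have "(1 - a) * (e + ln (1 / \<delta>) / (a - 1)) = - ((a - 1) * e) + ln \<delta>"
      using a d by (simp add: field_simps ln_div)
    finally have "?K powr (1 - a) * exp ((a - 1) * e) = exp (- ((a - 1) * e) + ln \<delta>) * exp ((a - 1) * e)" by simp
    also have "\<dots> = exp (ln \<delta>)" by (simp add: exp_add[symmetric])
    finally show ?thesis using d by simp
  qed
  then have "ennreal (?K powr (1 - a)) * ennreal (exp ((a - 1) * e)) = ennreal \<delta>"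
    by (simp add: ennreal_mult'[symmetric])
  finally have "emeasure P A \<le> ennreal ?K * emeasure Q A + ennreal \<delta>" .
  then have "ennreal (measure P A) \<le> ennreal ?K * ennreal (measure Q A) + ennreal \<delta>"
    by (simp add: P.emeasure_eq_measure Q.emeasure_eq_measure)
  also have "ennreal ?K * ennreal (measure Q A) + ennreal \<delta> = ennreal (?K * measure Q A + \<delta>)"
    using d by (simp add: ennreal_mult'[symmetric] ennreal_plus[symmetric] del: ennreal_plus)
  finally have "ennreal (measure P A) \<le> ennreal (?K * measure Q A + \<delta>)" .
  then show ?thesis using d by (subst (asm) ennreal_le_iff) auto
qed

lemma emeasure_lborel_affine_pre:
  fixes k b :: real
  assumes k: "0 < k" and A: "A \<in> sets borel"
  shows "emeasure lborel {x. (x - b) / k \<in> A} = ennreal k * emeasure lborel A"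
proof -
  have m: "(\<lambda>x. indicator {x. (x - b) / k \<in> A} x :: ennreal) \<in> borel_measurable borel"
    using A by measurable
  have "emeasure lborel {x. (x - b) / k \<in> A} = (\<integral>\<^sup>+x. indicator {x. (x - b) / k \<in> A} x \<partial>lborel)"
    using A by simp
  also have "\<dots> = ennreal \<bar>k\<bar> * (\<integral>\<^sup>+x. indicator {x. (x - b) / k \<in> A} (b + k * x) \<partial>lborel)"
    using nn_integral_real_affine[OF m, where c=k and t=b] k by simp
  also have "(\<lambda>x. indicator {x. (x - b) / k \<in> A} (b + k * x) :: ennreal) = indicator A"
    using k by (auto simp: indicator_def fun_eq_iff)
  also have "(\<integral>\<^sup>+x. indicator A x \<partial>lborel) = emeasure lborel A"
    using A by simp
  finally show ?thesis using k by simp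
qed

lemma inv_mul_one_aux: "(K::real) \<noteq> 0 \<Longrightarrow> 1 / K * K = 1" by simp

lemma aux_scale: "(K::real) \<noteq> 0 \<Longrightarrow> (v / K) * ((u / K) / (v / K)) powr a = (1 / K) * (v * (u / v) powr a)"
  by simp

definition aff_inv :: "('d::finite \<Rightarrow> real) \<Rightarrow> ('d \<Rightarrow> real) \<Rightarrow> ('d \<Rightarrow> real) \<Rightarrow> ('d \<Rightarrow> real)" where
  "aff_inv k b x = (\<lambda>j. (x j - b j) / k j)"

lemma aff_inv_meas_v: "aff_inv k b \<in> measurable (vspace :: ('d::finite \<Rightarrow> real) measure) vspace"
  unfolding aff_inv_def vspace_def
  by (rule measurable_PiM_single') measurable

lemma aff_inv_meas[measurable]: "aff_inv k b \<in> measurable (LD :: ('d::finite \<Rightarrow> real) measure) LD"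
  using aff_inv_meas_v by (simp add: measurable_cong_sets[OF sets_LD sets_LD])

lemma distr_aff_inv:
  fixes k :: "'d::finite \<Rightarrow> real"
  assumes k: "\<And>j. 0 < k j"
  shows "distr LD LD (aff_inv k b) = density LD (\<lambda>_. ennreal (\<Prod>j\<in>UNIV. k j))"
proof -
  let ?K = "\<Prod>j\<in>UNIV. k j"
  have Kpos: "0 < ?K" using k by (simp add: prod_pos)
  have c1: "ennreal (1 / ?K) * ennreal ?K = 1"
  proof -
    have "1 / ?K * ?K = 1" by (rule inv_mul_one_aux) (use Kpos in linarith)
    moreover have "ennreal (1 / ?K * ?K) = ennreal (1 / ?K) * ennreal ?K"
      using Kpos by (intro ennreal_mult') simp
    ultimately show ?thesis by simp
  qed
  have knz: "\<And>j. k j \<noteq> 0" using k by (metis less_irrefl)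
  have 1: "density (distr LD LD (aff_inv k b)) (\<lambda>_. ennreal (1 / ?K)) = LD"
    unfolding LD_def
  proof (rule LDprod.PiM_eqI)
    show "sets (density (distr (PiM UNIV (\<lambda>_. lborel)) (PiM UNIV (\<lambda>_. lborel)) (aff_inv k b)) (\<lambda>_. ennreal (1 / ?K))) = sets (PiM UNIV (\<lambda>_. lborel :: real measure))"
      by simp
    fix A :: "'d \<Rightarrow> real set" assume A: "\<And>i. i \<in> UNIV \<Longrightarrow> A i \<in> sets lborel"
    have PA: "Pi\<^sub>E UNIV A \<in> sets (PiM UNIV (\<lambda>_. lborel :: real measure))"
      using A by (intro sets_PiM_I_finite) auto
    have pre: "aff_inv k b -` Pi\<^sub>E UNIV A \<inter> space (PiM UNIV (\<lambda>_. lborel :: real measure)) = Pi\<^sub>E UNIV (\<lambda>j. {x. (x - b j) / k j \<in> A j})"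
      by (auto simp: aff_inv_def space_PiM PiE_UNIV_domain Pi_iff)
    have "emeasure (density (distr (PiM UNIV (\<lambda>_. lborel)) (PiM UNIV (\<lambda>_. lborel)) (aff_inv k b)) (\<lambda>_. ennreal (1 / ?K))) (Pi\<^sub>E UNIV A)
      = ennreal (1 / ?K) * emeasure (distr (PiM UNIV (\<lambda>_. lborel)) (PiM UNIV (\<lambda>_. lborel)) (aff_inv k b)) (Pi\<^sub>E UNIV A)"
      using PA by (simp add: emeasure_density_const)
    also have "emeasure (distr (PiM UNIV (\<lambda>_. lborel)) (PiM UNIV (\<lambda>_. lborel)) (aff_inv k b)) (Pi\<^sub>E UNIV A)
      = emeasure (PiM UNIV (\<lambda>_. lborel :: real measure)) (Pi\<^sub>E UNIV (\<lambda>j. {x. (x - b j) / k j \<in> A j}))"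
      using PA aff_inv_meas[of k b] unfolding LD_def by (simp add: emeasure_distr pre)
    also have "\<dots> = (\<Prod>j\<in>UNIV. emeasure lborel {x. (x - b j) / k j \<in> A j})"
      using A by (intro LDprod.emeasure_PiM) auto
    also have "\<dots> = (\<Prod>j\<in>UNIV. ennreal (k j) * emeasure lborel (A j))"
      using A k by (intro prod.cong refl emeasure_lborel_affine_pre) auto
    also have "\<dots> = ennreal ?K * (\<Prod>j\<in>UNIV. emeasure lborel (A j))"
    proof -
      have "(\<Prod>j\<in>UNIV. ennreal (k j) * emeasure lborel (A j)) = (\<Prod>j\<in>UNIV. ennreal (k j)) * (\<Prod>j\<in>UNIV. emeasure lborel (A j))"
        by (rule prod.distrib)
      moreover have "(\<Prod>j\<in>UNIV. ennreal (k j)) = ennreal ?K"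
        by (rule prod_ennreal) (simp add: less_imp_le k)
      ultimately show ?thesis by simp
    qed
    also have "ennreal (1 / ?K) * (ennreal ?K * (\<Prod>j\<in>UNIV. emeasure lborel (A j))) = (\<Prod>j\<in>UNIV. emeasure lborel (A j))"
      by (simp only: mult.assoc[symmetric] c1 mult_1)
    finally show "emeasure (density (distr (PiM UNIV (\<lambda>_. lborel)) (PiM UNIV (\<lambda>_. lborel)) (aff_inv k b)) (\<lambda>_. ennreal (1 / ?K))) (Pi\<^sub>E UNIV A) = (\<Prod>j\<in>UNIV. emeasure lborel (A j))" .
  qed simp
  have "density LD (\<lambda>_. ennreal ?K) = density (density (distr LD LD (aff_inv k b)) (\<lambda>_. ennreal (1 / ?K))) (\<lambda>_. ennreal ?K)"
    by (simp add: 1)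
  also have "\<dots> = density (distr LD LD (aff_inv k b)) (\<lambda>_. ennreal (1 / ?K) * ennreal ?K)"
    by (rule density_density_eq) auto
  also have "(\<lambda>_. ennreal (1 / ?K) * ennreal ?K) = (\<lambda>_. 1)"
    by (simp only: c1)
  also have "density (distr LD LD (aff_inv k b)) (\<lambda>_. 1) = distr LD LD (aff_inv k b)"
    by (rule density_1)
  finally show ?thesis ..
qed

lemma nn_integral_aff_inv:
  fixes k :: "'d::finite \<Rightarrow> real"
  assumes k: "\<And>j. 0 < k j" and f: "f \<in> borel_measurable LD"
  shows "(\<integral>\<^sup>+x. f (aff_inv k b x) \<partial>LD) = ennreal (\<Prod>j\<in>UNIV. k j) * (\<integral>\<^sup>+y. f y \<partial>LD)"
proof -
  have "(\<integral>\<^sup>+x. f (aff_inv k b x) \<partial>LD) = (\<integral>\<^sup>+y. f y \<partial>distr LD LD (aff_inv k b))"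
    using f by (intro nn_integral_distr[symmetric]) auto
  also have "\<dots> = (\<integral>\<^sup>+y. f y \<partial>density LD (\<lambda>_. ennreal (\<Prod>j\<in>UNIV. k j)))"
    by (simp add: distr_aff_inv[OF k])
  also have "\<dots> = (\<integral>\<^sup>+y. ennreal (\<Prod>j\<in>UNIV. k j) * f y \<partial>LD)"
    using f by (intro nn_integral_density) auto
  also have "\<dots> = ennreal (\<Prod>j\<in>UNIV. k j) * (\<integral>\<^sup>+y. f y \<partial>LD)"
    using f by (intro nn_integral_cmult) auto
  finally show ?thesis .
qed

lemma normal_density_scale:
  fixes k \<sigma> \<nu> b x :: real
  assumes k: "0 < k" and s: "0 < \<sigma>"
  shows "normal_density (k * \<nu> + b) (k * \<sigma>) x = normal_density \<nu> \<sigma> ((x - b) / k) / k"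
proof -
  have 1: "sqrt (2 * pi * (k * \<sigma>)\<^sup>2) = k * sqrt (2 * pi * \<sigma>\<^sup>2)"
    using k by (simp add: power_mult_distrib real_sqrt_mult mult_ac)
  have 2: "-(x - (k * \<nu> + b))\<^sup>2 / (2 * (k * \<sigma>)\<^sup>2) = -((x - b) / k - \<nu>)\<^sup>2 / (2 * \<sigma>\<^sup>2)"
    using k s by (simp add: field_simps power2_eq_square)
  show ?thesis unfolding normal_density_def 1 2 using k by simp
qed

lemma gdens_scale:
  fixes k :: "'d::finite \<Rightarrow> real"
  assumes k: "\<And>j. 0 < k j" and s: "0 < \<sigma>"
  shows "gdens (\<lambda>j. k j * \<sigma>) (\<lambda>j. k j * \<nu> j + b j) x = gdens (\<lambda>_. \<sigma>) \<nu> (aff_inv k b x) / (\<Prod>j\<in>UNIV. k j)"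
  unfolding gdens_def aff_inv_def
  using k s by (simp add: normal_density_scale prod_dividef)

lemma mixdens_scale:
  fixes k :: "'d::finite \<Rightarrow> real"
  assumes k: "\<And>j. 0 < k j" and s: "0 < \<sigma>"
  shows "mixdens q n (\<lambda>j. k j * \<sigma>) (\<lambda>m j. k j * \<nu> m j + b j) x = mixdens q n (\<lambda>_. \<sigma>) \<nu> (aff_inv k b x) / (\<Prod>j\<in>UNIV. k j)"
  unfolding mixdens_def
  by (simp add: gdens_scale[OF k s] sum_divide_distrib)

lemma renyi_integrand_scale:
  fixes k :: "'d::finite \<Rightarrow> real" and \<psi> \<psi>' :: "('d \<Rightarrow> real) \<Rightarrow> real"
  assumes k: "\<And>j. 0 < k j" and m: "\<psi> \<in> borel_measurable LD" "\<psi>' \<in> borel_measurable LD"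
  shows "(\<integral>\<^sup>+x. ennreal ((\<psi>' (aff_inv k b x) / (\<Prod>j\<in>UNIV. k j)) * ((\<psi> (aff_inv k b x) / (\<Prod>j\<in>UNIV. k j)) / (\<psi>' (aff_inv k b x) / (\<Prod>j\<in>UNIV. k j))) powr a) \<partial>LD)
       = (\<integral>\<^sup>+y. ennreal (\<psi>' y * (\<psi> y / \<psi>' y) powr a) \<partial>LD)"
proof -
  note m[measurable]
  let ?K = "\<Prod>j\<in>UNIV. k j"
  have Kpos: "0 < ?K" using k by (simp add: prod_pos)
  have c1: "ennreal (1 / ?K) * ennreal ?K = 1"
  proof -
    have "1 / ?K * ?K = 1" by (rule inv_mul_one_aux) (use Kpos in linarith)
    moreover have "ennreal (1 / ?K * ?K) = ennreal (1 / ?K) * ennreal ?K"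
      using Kpos by (intro ennreal_mult') simp
    ultimately show ?thesis by simp
  qed
  have knz: "\<And>j. k j \<noteq> 0" using k by (metis less_irrefl)
  have "(\<integral>\<^sup>+x. ennreal ((\<psi>' (aff_inv k b x) / ?K) * ((\<psi> (aff_inv k b x) / ?K) / (\<psi>' (aff_inv k b x) / ?K)) powr a) \<partial>LD)
      = (\<integral>\<^sup>+x. ennreal (1 / ?K) * ennreal (\<psi>' (aff_inv k b x) * (\<psi> (aff_inv k b x) / \<psi>' (aff_inv k b x)) powr a) \<partial>LD)"
  proof (rule nn_integral_cong)
    fix x
    let ?u = "\<psi> (aff_inv k b x)" and ?v = "\<psi>' (aff_inv k b x)"
    have "(?v / ?K) * ((?u / ?K) / (?v / ?K)) powr a = (1 / ?K) * (?v * (?u / ?v) powr a)"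
      by (rule aux_scale) (use Kpos in linarith)
    then show "ennreal ((?v / ?K) * ((?u / ?K) / (?v / ?K)) powr a) = ennreal (1 / ?K) * ennreal (?v * (?u / ?v) powr a)"
      using Kpos by (simp only: ennreal_mult'[symmetric] divide_nonneg_pos[OF zero_le_one Kpos] less_imp_le)
  qed
  also have "\<dots> = ennreal (1 / ?K) * (\<integral>\<^sup>+x. ennreal (\<psi>' (aff_inv k b x) * (\<psi> (aff_inv k b x) / \<psi>' (aff_inv k b x)) powr a) \<partial>LD)"
    using m by (intro nn_integral_cmult) measurable
  also have "(\<integral>\<^sup>+x. ennreal (\<psi>' (aff_inv k b x) * (\<psi> (aff_inv k b x) / \<psi>' (aff_inv k b x)) powr a) \<partial>LD)
      = ennreal ?K * (\<integral>\<^sup>+y. ennreal (\<psi>' y * (\<psi> y / \<psi>' y) powr a) \<partial>LD)"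
    using m by (intro nn_integral_aff_inv[OF k, where f="\<lambda>y. ennreal (\<psi>' y * (\<psi> y / \<psi>' y) powr a)"]) measurable
  also have "ennreal (1 / ?K) * (ennreal ?K * (\<integral>\<^sup>+y. ennreal (\<psi>' y * (\<psi> y / \<psi>' y) powr a) \<partial>LD))
      = (\<integral>\<^sup>+y. ennreal (\<psi>' y * (\<psi> y / \<psi>' y) powr a) \<partial>LD)"
    by (simp only: mult.assoc[symmetric] c1 mult_1)
  finally show ?thesis .
qed

lemma remove_nth_map: "remove_nth i (map f D) = map f (remove_nth i D)"
  unfolding remove_nth_def by (simp add: take_map drop_map)

lemma adjacent_map: "adjacent D D' \<Longrightarrow> adjacent (map f D) (map f D')"
  unfolding adjacent_def by (auto simp: remove_nth_map)

lemma sigma_eff_pos: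
  fixes sg :: "'g::finite \<Rightarrow> real"
  assumes b: "0 < \<beta>" and sg: "\<And>g. 0 < sg g"
  shows "0 < sigma_eff \<beta> sg"
proof -
  have "0 < (\<Sum>g\<in>UNIV. 1 / (sg g)\<^sup>2)"
    by (intro sum_pos divide_pos_pos zero_less_power sg) simp_all
  then show ?thesis unfolding sigma_eff_def using b by simp
qed

lemma sigma_eff_sq:
  fixes sg :: "'g::finite \<Rightarrow> real"
  assumes b: "0 < \<beta>" and sg: "\<And>g. 0 < sg g"
  shows "(\<beta> * sigma_eff \<beta> sg)\<^sup>2 * (\<Sum>g\<in>UNIV. 1 / (sg g)\<^sup>2) = 1"
proof -
  let ?S = "\<Sum>g\<in>UNIV. 1 / (sg g)\<^sup>2"
  have S: "0 < ?S" by (intro sum_pos divide_pos_pos zero_less_power sg) simp_all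
  have "\<beta> * sigma_eff \<beta> sg = 1 / sqrt ?S" unfolding sigma_eff_def using b by simp
  then have "(\<beta> * sigma_eff \<beta> sg)\<^sup>2 = 1 / ?S" using S by (simp add: power_divide)
  then show ?thesis using S by simp
qed

lemma clip_group_sq:
  fixes v :: "'d::finite \<Rightarrow> real" and grp :: "'d \<Rightarrow> 'g"
  assumes C: "0 < C g"
  shows "(\<Sum>j\<in>{j. grp j = g}. (clip grp C v j)\<^sup>2) \<le> (C g)\<^sup>2"
proof -
  let ?n = "gnorm grp g v" and ?M = "max 1 (gnorm grp g v / C g)"
  have M: "1 \<le> ?M" by simp
  have n0: "0 \<le> ?n" unfolding gnorm_def by (rule real_sqrt_ge_zero) (rule sum_nonneg, simp)
  have "(\<Sum>j\<in>{j. grp j = g}. (clip grp C v j)\<^sup>2) = (\<Sum>j\<in>{j. grp j = g}. (v j)\<^sup>2 / ?M\<^sup>2)"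
    by (intro sum.cong refl) (simp add: clip_def power_divide)
  also have "\<dots> = (\<Sum>j\<in>{j. grp j = g}. (v j)\<^sup>2) / ?M\<^sup>2"
    by (simp add: sum_divide_distrib)
  also have "(\<Sum>j\<in>{j. grp j = g}. (v j)\<^sup>2) = ?n\<^sup>2"
  proof -
    have s0: "0 \<le> (\<Sum>j\<in>{j. grp j = g}. (v j)\<^sup>2)" by (rule sum_nonneg) simp
    show ?thesis unfolding gnorm_def using s0 by simp
  qed
  also have "?n\<^sup>2 / ?M\<^sup>2 = (?n / ?M)\<^sup>2" by (simp add: power_divide)
  also have "\<dots> \<le> (C g)\<^sup>2"
  proof (rule power_mono)
    have "?n / C g \<le> ?M" by simp
    then have "?n \<le> ?M * C g" using pos_divide_le_eq[OF C] by blast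
    then show "?n / ?M \<le> C g" using M by (simp add: divide_le_eq mult.commute)
    show "0 \<le> ?n / ?M" using n0 M by simp
  qed
  finally show ?thesis .
qed

lemma aux_sq: "(C::real) \<noteq> 0 \<Longrightarrow> s \<noteq> 0 \<Longrightarrow> (x / (s * C))\<^sup>2 * C\<^sup>2 = x\<^sup>2 * (1 / s\<^sup>2)"
  by (simp add: field_simps power2_eq_square)

lemma l2_scaled_clip:
  fixes v :: "'d::finite \<Rightarrow> real" and grp :: "'d \<Rightarrow> 'g::finite" and sg :: "'g \<Rightarrow> real"
  assumes C: "\<And>g. 0 < C g" and sg: "\<And>g. 0 < sg g" and b: "0 < \<beta>"
  defines "se \<equiv> sigma_eff \<beta> sg"
  shows "l2 (\<lambda>j. \<beta> * clip grp C v j / (sg (grp j) * C (grp j) / se)) \<le> 1"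
proof -
  have se: "0 < se" unfolding se_def using sigma_eff_pos[OF b sg] .
  let ?c = "\<lambda>g. (\<beta> * se / (sg g * C g))\<^sup>2"
  have trm: "\<And>j. (\<beta> * clip grp C v j / (sg (grp j) * C (grp j) / se))\<^sup>2 = ?c (grp j) * (clip grp C v j)\<^sup>2"
    using se by (simp add: power_divide power_mult_distrib field_simps)
  have "(\<Sum>j\<in>UNIV. (\<beta> * clip grp C v j / (sg (grp j) * C (grp j) / se))\<^sup>2)
      = (\<Sum>j\<in>UNIV. ?c (grp j) * (clip grp C v j)\<^sup>2)"
    by (simp only: trm)
  also have "\<dots> = (\<Sum>g\<in>UNIV. \<Sum>j\<in>{j. j \<in> UNIV \<and> grp j = g}. ?c (grp j) * (clip grp C v j)\<^sup>2)"
    by (rule sum.group[symmetric]) auto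
  also have "\<dots> = (\<Sum>g\<in>UNIV. ?c g * (\<Sum>j\<in>{j. grp j = g}. (clip grp C v j)\<^sup>2))"
    by (intro sum.cong refl) (auto simp: sum_distrib_left)
  also have "\<dots> \<le> (\<Sum>g\<in>UNIV. ?c g * (C g)\<^sup>2)"
    by (intro sum_mono mult_left_mono clip_group_sq C) auto
  also have "\<dots> = (\<Sum>g\<in>UNIV. (\<beta> * se)\<^sup>2 * (1 / (sg g)\<^sup>2))"
  proof (rule sum.cong[OF refl])
    fix g
    have "C g \<noteq> 0" "sg g \<noteq> 0" using C[of g] sg[of g] by auto
    then show "?c g * (C g)\<^sup>2 = (\<beta> * se)\<^sup>2 * (1 / (sg g)\<^sup>2)" by (rule aux_sq)
  qed
  also have "\<dots> = (\<beta> * se)\<^sup>2 * (\<Sum>g\<in>UNIV. 1 / (sg g)\<^sup>2)"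
    by (simp add: sum_distrib_left)
  also have "\<dots> = 1" unfolding se_def by (rule sigma_eff_sq[OF b sg])
  finally show ?thesis unfolding l2_def by simp
qed

lemma mixdens_meas[measurable]: "(\<lambda>x. mixdens q n s \<mu> x) \<in> borel_measurable (LD :: ('d::finite \<Rightarrow> real) measure)"
  unfolding mixdens_def measurable_cong_sets[OF sets_LD refl] by measurable

lemma prob_space_mix:
  fixes s :: "'d::finite \<Rightarrow> real"
  assumes s: "\<And>j. 0 < s j"
  shows "prob_space (density LD (\<lambda>x. ennreal (mixdens q n s \<mu> x)))"
proof -
  interpret N: prob_space "gauss_noise s" by (rule prob_space_gauss_noise) (rule s)
  interpret M: prob_space "poisson_mask q n" unfolding poisson_mask_def by (rule prob_space_measure_pmf)
  interpret MN: pair_prob_space "poisson_mask q n" "gauss_noise s" ..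
  have "prob_space (distr (poisson_mask q n \<Otimes>\<^sub>M gauss_noise s) vspace (\<lambda>(m, z) j. \<mu> m j + z j))"
    by (rule MN.prob_space_distr) (rule measurable_mix_map)
  then show ?thesis by (simp add: mix_density[OF s])
qed

lemma sgm_density:
  assumes s: "0 < \<sigma>"
  shows "sgm q \<sigma> (xs :: ('d::finite \<Rightarrow> real) list) = density LD (\<lambda>x. ennreal (mixdens q (length xs) (\<lambda>_. \<sigma>) (\<lambda>m j. \<Sum>i<length xs. if m i then (xs ! i) j else 0) x))"
  unfolding sgm_def using mix_density[where s="\<lambda>_. \<sigma>" and q=q and n="length xs" and \<mu>="\<lambda>m j. \<Sum>i<length xs. if m i then (xs ! i) j else 0"] s
  by simp

definition sdev :: "('d \<Rightarrow> 'g) \<Rightarrow> ('g \<Rightarrow> real) \<Rightarrow> (nat \<Rightarrow> 'g \<Rightarrow> real) \<Rightarrow> nat \<Rightarrow> 'd \<Rightarrow> real" where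
  "sdev grp C sig t j = sig t (grp j) * C (grp j)"

definition smu :: "('d::finite \<Rightarrow> 'g) \<Rightarrow> ('g \<Rightarrow> real) \<Rightarrow> real
   \<Rightarrow> (nat \<Rightarrow> (nat \<Rightarrow> 'd \<Rightarrow> real) \<Rightarrow> 'x \<Rightarrow> ('d \<Rightarrow> real))
   \<Rightarrow> (nat \<Rightarrow> (nat \<Rightarrow> 'd \<Rightarrow> real) \<Rightarrow> ('d \<Rightarrow> real))
   \<Rightarrow> nat \<Rightarrow> (nat \<Rightarrow> 'd \<Rightarrow> real) \<Rightarrow> 'x list \<Rightarrow> (nat \<Rightarrow> bool) \<Rightarrow> 'd \<Rightarrow> real" where
  "smu grp C \<beta> grad b t h D m j = \<beta> * (\<Sum>i<length D. if m i then clip grp C (grad t h (D ! i)) j else 0) + b t h j"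

definition sdens where
  "sdens grp C sig \<beta> q grad b t D h x = mixdens (q t) (length D) (sdev grp C sig t) (smu grp C \<beta> grad b t h D) x"

lemma step_density:
  assumes C: "\<And>g. 0 < C g" and sig: "\<And>t g. 0 < sig t g"
  shows "sma_step grp C sig \<beta> q grad b t D h = density LD (\<lambda>x. ennreal (sdens grp C sig \<beta> q grad b t D h x))"
proof -
  have e1: "sdev grp C sig t = (\<lambda>j. sig t (grp j) * C (grp j))" by (simp add: fun_eq_iff sdev_def)
  have e2: "smu grp C \<beta> grad b t h D = (\<lambda>m j. \<beta> * (\<Sum>i<length D. if m i then clip grp C (grad t h (D ! i)) j else 0) + b t h j)"
    by (simp add: fun_eq_iff smu_def)
  show ?thesis
    unfolding sma_step_def sdens_def e1 e2
    by (rule mix_density) (use C sig in simp)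
qed

lemma step_renyi:
  fixes grp :: "'d::finite \<Rightarrow> 'g::finite"
  assumes C: "\<And>g. 0 < C g" and sig: "\<And>t g. 0 < sig t g" and b0: "0 < \<beta>"
    and q: "q t \<in> {0..1}" and valid: "valid_sgm_bound TYPE('d) eps_sgm"
    and a: "1 < a" and adj: "adjacent D D'"
  shows "(\<integral>\<^sup>+x. ennreal (sdens grp C sig \<beta> q grad b t D' h x * (sdens grp C sig \<beta> q grad b t D h x / sdens grp C sig \<beta> q grad b t D' h x) powr a) \<partial>LD)
     \<le> ennreal (exp ((a - 1) * eps_sgm a (q t) (sigma_eff \<beta> (sig t))))"
proof -
  define se where "se = sigma_eff \<beta> (sig t)"
  have se: "0 < se" unfolding se_def by (rule sigma_eff_pos[OF b0 sig])
  define k where "k = (\<lambda>j. sig t (grp j) * C (grp j) / se)"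
  have k: "\<And>j. 0 < k j" unfolding k_def using se C sig by simp
  define w where "w = (\<lambda>x j. \<beta> * clip grp C (grad t h x) j / k j)"
  define \<nu> where "\<nu> = (\<lambda>(E :: ('d \<Rightarrow> real) list) m j. \<Sum>i<length E. if m i then (E ! i) j else 0)"
  define \<psi> where "\<psi> = (\<lambda>E x. mixdens (q t) (length E) (\<lambda>_. se) (\<nu> E) x)"
  have sdev_eq: "sdev grp C sig t = (\<lambda>j. k j * se)"
    unfolding sdev_def k_def using se by (auto simp: fun_eq_iff)
  have smu_eq: "\<And>E. smu grp C \<beta> grad b t h E = (\<lambda>m j. k j * \<nu> (map w E) m j + b t h j)"
  proof (intro ext)
    fix E m j
    have "k j * \<nu> (map w E) m j = (\<Sum>i<length E. k j * (if m i then w (E ! i) j else 0))"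
      unfolding \<nu>_def by (auto simp: sum_distrib_left intro!: sum.cong)
    also have "\<dots> = (\<Sum>i<length E. \<beta> * (if m i then clip grp C (grad t h (E ! i)) j else 0))"
      using k[of j] by (intro sum.cong refl) (auto simp: w_def)
    also have "\<dots> = \<beta> * (\<Sum>i<length E. if m i then clip grp C (grad t h (E ! i)) j else 0)"
      by (simp add: sum_distrib_left)
    finally show "smu grp C \<beta> grad b t h E m j = k j * \<nu> (map w E) m j + b t h j"
      unfolding smu_def by simp
  qed
  have sd: "\<And>E x. sdens grp C sig \<beta> q grad b t E h x = \<psi> (map w E) (aff_inv k (b t h) x) / (\<Prod>j\<in>UNIV. k j)"
    unfolding sdens_def sdev_eq smu_eq \<psi>_def using mixdens_scale[OF k se] by simp
  have "(\<integral>\<^sup>+x. ennreal (sdens grp C sig \<beta> q grad b t D' h x * (sdens grp C sig \<beta> q grad b t D h x / sdens grp C sig \<beta> q grad b t D' h x) powr a) \<partial>LD)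
      = (\<integral>\<^sup>+y. ennreal (\<psi> (map w D') y * (\<psi> (map w D) y / \<psi> (map w D') y) powr a) \<partial>LD)"
    unfolding sd by (rule renyi_integrand_scale[OF k]) (simp_all add: \<psi>_def)
  also have "\<dots> = renyi_int a (sgm (q t) se (map w D)) (sgm (q t) se (map w D'))"
  proof -
    have eqs: "\<And>E. sgm (q t) se E = density LD (\<lambda>x. ennreal (\<psi> E x))"
      unfolding \<psi>_def \<nu>_def by (rule sgm_density[OF se])
    show ?thesis unfolding eqs
      by (rule renyi_int_density(2)[symmetric])
         (auto simp: \<psi>_def mixdens_nonneg mixdens_pos se intro!: prob_space_mix)
  qed
  also have "\<dots> \<le> ennreal (exp ((a - 1) * eps_sgm a (q t) se))"
  proof (rule renyi_bound_D(3)[OF _ a])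
    have "adjacent (map w D) (map w D')" using adj by (rule adjacent_map)
    moreover have "\<forall>v \<in> set (map w D) \<union> set (map w D'). l2 v \<le> 1"
      unfolding w_def k_def se_def using l2_scaled_clip[OF C sig b0] by auto
    ultimately show "renyi_div a (sgm (q t) se (map w D)) (sgm (q t) se (map w D')) \<le> ereal (eps_sgm a (q t) se)"
      using valid q se a unfolding valid_sgm_bound_def by blast
  qed
  finally show ?thesis unfolding se_def .
qed

lemma comp_vspace_meas:
  assumes f: "f \<in> M \<rightarrow>\<^sub>M (vspace :: ('d::finite \<Rightarrow> real) measure)"
  shows "(\<lambda>h. f h j) \<in> borel_measurable M"
proof -
  have c: "(\<lambda>x. x j) \<in> borel_measurable (vspace :: ('d \<Rightarrow> real) measure)"
    unfolding vspace_def by (rule measurable_component_singleton) simp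
  show ?thesis using measurable_compose[OF f c] by simp
qed

lemma clip_meas:
  fixes grp :: "'d::finite \<Rightarrow> 'g"
  assumes f: "f \<in> M \<rightarrow>\<^sub>M (vspace :: ('d \<Rightarrow> real) measure)"
  shows "(\<lambda>h. clip grp C (f h) j) \<in> borel_measurable M"
proof -
  have [measurable]: "\<And>j. (\<lambda>h. f h j) \<in> borel_measurable M" using f by (rule comp_vspace_meas)
  show ?thesis unfolding clip_def gnorm_def by measurable
qed

lemma smu_meas:
  fixes grp :: "'d::finite \<Rightarrow> 'g"
  assumes grad_meas: "\<And>t x. (\<lambda>h. grad t h x) \<in> hspace t \<rightarrow>\<^sub>M vspace"
    and b_meas: "\<And>t. b t \<in> hspace t \<rightarrow>\<^sub>M vspace"
  shows "(\<lambda>h. smu grp C \<beta> grad b t h D m j) \<in> borel_measurable (hspace t)"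
proof -
  have [measurable]: "\<And>x. (\<lambda>h. clip grp C (grad t h x) j) \<in> borel_measurable (hspace t)"
    using grad_meas by (rule clip_meas)
  have [measurable]: "(\<lambda>h. b t h j) \<in> borel_measurable (hspace t)"
    using b_meas by (rule comp_vspace_meas)
  show ?thesis unfolding smu_def by measurable
qed

lemma sdens_meas:
  fixes grp :: "'d::finite \<Rightarrow> 'g"
  assumes grad_meas: "\<And>t x. (\<lambda>h. grad t h x) \<in> hspace t \<rightarrow>\<^sub>M vspace"
    and b_meas: "\<And>t. b t \<in> hspace t \<rightarrow>\<^sub>M vspace"
  shows "(\<lambda>p. sdens grp C sig \<beta> q grad b t D (fst p) (snd p)) \<in> borel_measurable (hspace t \<Otimes>\<^sub>M (LD :: ('d \<Rightarrow> real) measure))"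
proof -
  have [measurable]: "\<And>m j. (\<lambda>h. smu grp C \<beta> grad b t h D m j) \<in> borel_measurable (hspace t)"
    using grad_meas b_meas by (rule smu_meas)
  have [measurable]: "\<And>j. (\<lambda>x. x j) \<in> borel_measurable (LD :: ('d \<Rightarrow> real) measure)"
    unfolding LD_def by measurable
  show ?thesis unfolding sdens_def mixdens_def gdens_def normal_density_def by measurable
qed

lemma sdev_pos:
  assumes C: "\<And>g. 0 < C g" and sig: "\<And>t g. 0 < sig t g"
  shows "0 < sdev grp C sig t j"
  unfolding sdev_def using C sig by simp

lemma sdens_pos:
  assumes C: "\<And>g. 0 < C g" and sig: "\<And>t g. 0 < sig t g"
  shows "0 < sdens grp C sig \<beta> q grad b t D h x"
  unfolding sdens_def by (rule mixdens_pos) (rule sdev_pos[OF C sig])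

lemma prob_space_step:
  assumes C: "\<And>g. 0 < C g" and sig: "\<And>t g. 0 < sig t g"
  shows "prob_space (sma_step grp C sig \<beta> q grad b t D h)"
  unfolding step_density[OF C sig] sdens_def
  by (rule prob_space_mix) (rule sdev_pos[OF C sig])

definition LH :: "nat \<Rightarrow> (nat \<Rightarrow> 'd::finite \<Rightarrow> real) measure" where
  "LH T = PiM {..<T} (\<lambda>_. LD)"

lemma sets_LH: "sets (LH T) = sets (hspace T)"
  unfolding LH_def hspace_def by (rule sets_PiM_cong) (auto simp: sets_LD)

lemma space_LH: "space (LH T) = space (hspace T)"
  using sets_LH by (rule sets_eq_imp_space_eq)

interpretation LDH: product_sigma_finite "\<lambda>_::nat. LD :: ('d::finite \<Rightarrow> real) measure"
  by (auto simp: product_sigma_finite_def intro: sigma_finite_LD)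

definition HD where
  "HD grp C sig \<beta> q grad b T D h = (\<Prod>t<T. sdens grp C sig \<beta> q grad b t D (restrict h {..<t}) (h t))"

lemma HD_pos:
  assumes C: "\<And>g. 0 < C g" and sig: "\<And>t g. 0 < sig t g"
  shows "0 < HD grp C sig \<beta> q grad b T D h"
  unfolding HD_def by (intro prod_pos sdens_pos[OF C sig])

lemma HD_meas:
  fixes grp :: "'d::finite \<Rightarrow> 'g"
  assumes grad_meas: "\<And>t x. (\<lambda>h. grad t h x) \<in> hspace t \<rightarrow>\<^sub>M vspace"
    and b_meas: "\<And>t. b t \<in> hspace t \<rightarrow>\<^sub>M vspace"
  shows "(\<lambda>h. HD grp C sig \<beta> q grad b T D h) \<in> borel_measurable (LH T :: (nat \<Rightarrow> 'd \<Rightarrow> real) measure)"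
  unfolding HD_def
proof (rule borel_measurable_prod)
  fix t assume t: "t \<in> {..<T}"
  have r: "(\<lambda>h. restrict h {..<t}) \<in> (LH T :: (nat \<Rightarrow> 'd \<Rightarrow> real) measure) \<rightarrow>\<^sub>M hspace t"
    unfolding LH_def hspace_def using t
    by (intro measurable_restrict_subset') (auto simp: sets_LD)
  have c: "(\<lambda>h. h t) \<in> (LH T :: (nat \<Rightarrow> 'd \<Rightarrow> real) measure) \<rightarrow>\<^sub>M LD"
    unfolding LH_def using t by (intro measurable_component_singleton) auto
  have p: "(\<lambda>h. (restrict h {..<t}, h t)) \<in> (LH T :: (nat \<Rightarrow> 'd \<Rightarrow> real) measure) \<rightarrow>\<^sub>M (hspace t \<Otimes>\<^sub>M LD)"
    using r c by (rule measurable_Pair)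
  show "(\<lambda>h. sdens grp C sig \<beta> q grad b t D (restrict h {..<t}) (h t)) \<in> borel_measurable (LH T)"
    using measurable_compose[OF p sdens_meas[OF grad_meas b_meas]] by simp
qed

lemma HD_upd:
  assumes h: "h \<in> space (hspace T)"
  shows "HD grp C sig \<beta> q grad b (Suc T) D (h(T := s)) = HD grp C sig \<beta> q grad b T D h * sdens grp C sig \<beta> q grad b T D h s"
proof -
  have ext: "h \<in> extensional {..<T}" using h unfolding hspace_def by (auto simp: space_PiM PiE_def)
  have r1: "\<And>t. t < T \<Longrightarrow> restrict (h(T := s)) {..<t} = restrict h {..<t}"
    by (auto simp: restrict_def fun_eq_iff)
  have r2: "restrict (h(T := s)) {..<T} = h"
  proof -
    have "restrict (h(T := s)) {..<T} = restrict h {..<T}" by (auto simp: restrict_def fun_eq_iff)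
    also have "\<dots> = h" using ext by (rule extensional_restrict)
    finally show ?thesis .
  qed
  have "HD grp C sig \<beta> q grad b (Suc T) D (h(T := s))
      = (\<Prod>t<T. sdens grp C sig \<beta> q grad b t D (restrict (h(T := s)) {..<t}) ((h(T := s)) t))
        * sdens grp C sig \<beta> q grad b T D (restrict (h(T := s)) {..<T}) ((h(T := s)) T)"
    unfolding HD_def by (simp add: prod.lessThan_Suc)
  also have "(\<Prod>t<T. sdens grp C sig \<beta> q grad b t D (restrict (h(T := s)) {..<t}) ((h(T := s)) t))
      = HD grp C sig \<beta> q grad b T D h"
    unfolding HD_def by (intro prod.cong refl) (simp add: r1)
  finally show ?thesis by (simp only: r2 fun_upd_same)
qed

lemma LH_0: "LH 0 = count_space {\<lambda>_. undefined}"
  unfolding LH_def by (simp add: PiM_empty)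

lemma hspace_0: "hspace 0 = count_space {\<lambda>_. undefined}"
  unfolding hspace_def by (simp add: PiM_empty)

lemma return_singleton: "return (count_space {u}) u = count_space {u}"
proof (rule measure_eqI)
  fix A assume "A \<in> sets (return (count_space {u}) u)"
  then have "A \<subseteq> {u}" by simp
  then have "A = {} \<or> A = {u}" by blast
  then show "emeasure (return (count_space {u}) u) A = emeasure (count_space {u}) A"
    by auto
qed simp

lemma lessThan_Suc_insert: "{..<Suc T} = insert T {..<T}" by auto

lemma hspace_Suc: "hspace (Suc T) = PiM (insert T {..<T}) (\<lambda>_. vspace)"
  unfolding hspace_def lessThan_Suc_insert ..

lemma LH_Suc: "LH (Suc T) = PiM (insert T {..<T}) (\<lambda>_. LD)"
  unfolding LH_def lessThan_Suc_insert ..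

lemma hist_density:
  fixes grp :: "'d::finite \<Rightarrow> 'g"
  assumes C: "\<And>g. 0 < C g" and sig: "\<And>t g. 0 < sig t g"
    and grad_meas: "\<And>t x. (\<lambda>h. grad t h x) \<in> hspace t \<rightarrow>\<^sub>M vspace"
    and b_meas: "\<And>t. b t \<in> hspace t \<rightarrow>\<^sub>M vspace"
  shows "sma_hist grp C sig \<beta> q grad b T D = density (LH T) (\<lambda>h. ennreal (HD grp C sig \<beta> q grad b T D h))
       \<and> prob_space (sma_hist grp C sig \<beta> q grad b T D)"
proof (induction T)
  case 0
  have "density (LH 0) (\<lambda>h. ennreal (HD grp C sig \<beta> q grad b 0 D h)) = count_space {\<lambda>_. undefined}"
    unfolding LH_0 HD_def by (simp add: density_1)
  moreover have "sma_hist grp C sig \<beta> q grad b 0 D = count_space {\<lambda>_. undefined}"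
    by (simp add: hspace_0 return_singleton)
  moreover have "prob_space (count_space {\<lambda>_::nat. undefined :: 'd \<Rightarrow> real})"
    by (rule prob_spaceI) simp
  ultimately show ?case by simp
next
  case (Suc T)
  let ?M = "sma_hist grp C sig \<beta> q grad b T D"
  let ?K = "\<lambda>h. distr (sma_step grp C sig \<beta> q grad b T D h) (hspace (Suc T)) (\<lambda>s. h(T := s))"
  let ?f = "\<lambda>h. HD grp C sig \<beta> q grad b T D h"
  let ?p = "\<lambda>h s. sdens grp C sig \<beta> q grad b T D h s"
  have HDm: "\<And>T'. (\<lambda>h. HD grp C sig \<beta> q grad b T' D h) \<in> borel_measurable (LH T' :: (nat \<Rightarrow> 'd \<Rightarrow> real) measure)"
    by (rule HD_meas[where grad=grad and b=b, OF grad_meas b_meas])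
  have Meq: "?M = density (LH T) (\<lambda>h. ennreal (?f h))" and Mprob: "prob_space ?M" using Suc.IH by auto
  have sM: "sets ?M = sets (hspace T)" by (simp add: Meq sets_LH)
  have spM: "space ?M = space (hspace T)" using sM by (rule sets_eq_imp_space_eq)
  have ne: "space ?M \<noteq> {}" using Mprob by (rule prob_space.not_empty)
  have upd_meas: "\<And>h. h \<in> space (hspace T :: (nat \<Rightarrow> 'd \<Rightarrow> real) measure) \<Longrightarrow> (\<lambda>s. h(T := s)) \<in> vspace \<rightarrow>\<^sub>M hspace (Suc T)"
    unfolding hspace_Suc by (rule measurable_component_update) (auto simp: hspace_def)
  have ssteps: "\<And>h. sets (sma_step grp C sig \<beta> q grad b T D h) = sets vspace"
    by (simp add: step_density[OF C sig] sets_LD)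
  have Kemeas: "\<And>h A. h \<in> space (hspace T :: (nat \<Rightarrow> 'd \<Rightarrow> real) measure) \<Longrightarrow> A \<in> sets (hspace (Suc T)) \<Longrightarrow>
      emeasure (?K h) A = (\<integral>\<^sup>+s. ennreal (?p h s) * indicator A (h(T := s)) \<partial>LD)"
  proof -
    fix h :: "nat \<Rightarrow> 'd \<Rightarrow> real" and A :: "(nat \<Rightarrow> 'd \<Rightarrow> real) set" assume h: "h \<in> space (hspace T)" and A: "A \<in> sets (hspace (Suc T))"
    have um: "(\<lambda>s. h(T := s)) \<in> sma_step grp C sig \<beta> q grad b T D h \<rightarrow>\<^sub>M hspace (Suc T)"
      using upd_meas[OF h] by (simp add: measurable_cong_sets[OF ssteps refl])
    have pre: "(\<lambda>s. h(T := s)) -` A \<inter> space LD \<in> sets LD"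
      using measurable_sets[OF upd_meas[OF h] A] by (simp add: sets_LD space_LD space_vspace)
    have "emeasure (?K h) A = emeasure (sma_step grp C sig \<beta> q grad b T D h) ((\<lambda>s. h(T := s)) -` A \<inter> space (sma_step grp C sig \<beta> q grad b T D h))"
      using um A by (rule emeasure_distr)
    also have "\<dots> = emeasure (density LD (\<lambda>x. ennreal (?p h x))) ((\<lambda>s. h(T := s)) -` A \<inter> space LD)"
      by (simp add: step_density[OF C sig])
    also have "\<dots> = (\<integral>\<^sup>+s. ennreal (?p h s) * indicator ((\<lambda>s. h(T := s)) -` A \<inter> space LD) s \<partial>LD)"
      using pre by (intro emeasure_density) (auto simp: sdens_def)
    also have "\<dots> = (\<integral>\<^sup>+s. ennreal (?p h s) * indicator A (h(T := s)) \<partial>LD)"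
      by (intro nn_integral_cong) (simp add: space_LD indicator_def)
    finally show "emeasure (?K h) A = (\<integral>\<^sup>+s. ennreal (?p h s) * indicator A (h(T := s)) \<partial>LD)" .
  qed
  have Kprob: "\<And>h. h \<in> space (hspace T :: (nat \<Rightarrow> 'd \<Rightarrow> real) measure) \<Longrightarrow> prob_space (?K h)"
  proof -
    fix h :: "nat \<Rightarrow> 'd \<Rightarrow> real" assume h: "h \<in> space (hspace T)"
    interpret S: prob_space "sma_step grp C sig \<beta> q grad b T D h" by (rule prob_space_step[OF C sig])
    show "prob_space (?K h)"
      using upd_meas[OF h] by (intro S.prob_space_distr) (simp add: measurable_cong_sets[OF ssteps refl])
  qed
  have joint: "\<And>A. A \<in> sets (hspace (Suc T)) \<Longrightarrow>
      (\<lambda>(h, s). ennreal (?p h s) * indicator A (h(T := s))) \<in> borel_measurable ((hspace T :: (nat \<Rightarrow> 'd \<Rightarrow> real) measure) \<Otimes>\<^sub>M LD)"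
  proof -
    fix A :: "(nat \<Rightarrow> 'd \<Rightarrow> real) set" assume A: "A \<in> sets (hspace (Suc T))"
    have pm: "(\<lambda>x. ?p (fst x) (snd x)) \<in> borel_measurable (hspace T \<Otimes>\<^sub>M LD)"
      by (rule sdens_meas[OF grad_meas b_meas])
    have am: "(\<lambda>(h, s). h(T := s)) \<in> ((hspace T :: (nat \<Rightarrow> 'd \<Rightarrow> real) measure) \<Otimes>\<^sub>M LD) \<rightarrow>\<^sub>M hspace (Suc T)"
    proof -
      have m1: "(\<lambda>(h, s). h(T := s)) \<in> (PiM {..<T} (\<lambda>_. vspace) \<Otimes>\<^sub>M vspace) \<rightarrow>\<^sub>M PiM (insert T {..<T}) (\<lambda>_. (vspace :: ('d \<Rightarrow> real) measure))"
        by (rule measurable_add_dim)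
      have S: "sets (PiM {..<T} (\<lambda>_. vspace) \<Otimes>\<^sub>M vspace) = sets (hspace T \<Otimes>\<^sub>M (LD :: ('d \<Rightarrow> real) measure))"
        unfolding hspace_def by (intro sets_pair_measure_cong refl) (simp add: sets_LD)
      show ?thesis unfolding hspace_Suc using m1 by (simp only: measurable_cong_sets[OF S refl])
    qed
    have im: "(\<lambda>x. indicator A ((\<lambda>(h, s). h(T := s)) x) :: ennreal) \<in> borel_measurable (hspace T \<Otimes>\<^sub>M LD)"
      using measurable_compose[OF am borel_measurable_indicator[OF A]] by simp
    show "(\<lambda>(h, s). ennreal (?p h s) * indicator A (h(T := s))) \<in> borel_measurable (hspace T \<Otimes>\<^sub>M LD)"
      using borel_measurable_times_ennreal[OF measurable_compose[OF pm measurable_ennreal] im]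
      by (simp add: case_prod_beta')
  qed
  interpret LDs: sigma_finite_measure "LD :: ('d \<Rightarrow> real) measure" by (rule sigma_finite_LD)
  have Kem_meas: "\<And>A. A \<in> sets (hspace (Suc T)) \<Longrightarrow> (\<lambda>h. emeasure (?K h) A) \<in> borel_measurable (hspace T :: (nat \<Rightarrow> 'd \<Rightarrow> real) measure)"
  proof -
    fix A :: "(nat \<Rightarrow> 'd \<Rightarrow> real) set" assume A: "A \<in> sets (hspace (Suc T))"
    have "(\<lambda>h. \<integral>\<^sup>+s. ennreal (?p h s) * indicator A (h(T := s)) \<partial>LD) \<in> borel_measurable (hspace T)"
      using joint[OF A] by (rule sigma_finite_measure.borel_measurable_nn_integral[OF sigma_finite_LD])
    then show "(\<lambda>h. emeasure (?K h) A) \<in> borel_measurable (hspace T)"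
      using Kemeas[OF _ A] by (subst measurable_cong) auto
  qed
  have Kmeas: "?K \<in> ?M \<rightarrow>\<^sub>M subprob_algebra (hspace (Suc T))"
  proof (rule measurable_subprob_algebra)
    fix h assume "h \<in> space ?M"
    then have h: "h \<in> space (hspace T)" by (simp add: spM)
    show "subprob_space (?K h)" using Kprob[OF h] by (rule prob_space_imp_subprob_space)
    show "sets (?K h) = sets (hspace (Suc T))" by simp
  next
    fix A :: "(nat \<Rightarrow> 'd \<Rightarrow> real) set" assume "A \<in> sets (hspace (Suc T))"
    then show "(\<lambda>h. emeasure (?K h) A) \<in> borel_measurable ?M"
      using Kem_meas by (simp add: measurable_cong_sets[OF sM refl])
  qed
  have hS: "sma_hist grp C sig \<beta> q grad b (Suc T) D = ?M \<bind> ?K" by simp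
  have sS: "sets (?M \<bind> ?K) = sets (hspace (Suc T))"
    using ne by (intro sets_bind) auto
  have eq: "?M \<bind> ?K = density (LH (Suc T)) (\<lambda>h. ennreal (HD grp C sig \<beta> q grad b (Suc T) D h))"
  proof (rule measure_eqI)
    show "sets (?M \<bind> ?K) = sets (density (LH (Suc T)) (\<lambda>h. ennreal (HD grp C sig \<beta> q grad b (Suc T) D h)))"
      by (simp add: sS sets_LH)
    fix A :: "(nat \<Rightarrow> 'd \<Rightarrow> real) set" assume "A \<in> sets (?M \<bind> ?K)"
    then have A: "A \<in> sets (hspace (Suc T))" by (simp add: sS)
    have AL: "A \<in> sets (LH (Suc T))" using A by (simp add: sets_LH)
    have fm: "(\<lambda>h. ?f h) \<in> borel_measurable (LH T)" by (rule HD_meas[OF grad_meas b_meas])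
    have gS: "(\<lambda>h. ennreal (HD grp C sig \<beta> q grad b (Suc T) D h) * indicator A h) \<in> borel_measurable (PiM (insert T {..<T}) (\<lambda>_. LD))"
      using HDm[of "Suc T"] AL unfolding LH_Suc by measurable
    have "emeasure (?M \<bind> ?K) A = (\<integral>\<^sup>+h. emeasure (?K h) A \<partial>?M)"
      using ne Kmeas A by (rule emeasure_bind)
    also have "\<dots> = (\<integral>\<^sup>+h. ennreal (?f h) * emeasure (?K h) A \<partial>LH T)"
      unfolding Meq using fm Kem_meas[OF A]
      by (intro nn_integral_density) (auto simp: measurable_cong_sets[OF sets_LH refl])
    also have "\<dots> = (\<integral>\<^sup>+h. (\<integral>\<^sup>+s. ennreal (HD grp C sig \<beta> q grad b (Suc T) D (h(T := s))) * indicator A (h(T := s)) \<partial>LD) \<partial>LH T)"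
    proof (rule nn_integral_cong)
      fix h :: "nat \<Rightarrow> 'd \<Rightarrow> real" assume "h \<in> space (LH T)"
      then have h: "h \<in> space (hspace T)" by (simp add: space_LH)
      have inner_m: "(\<lambda>s. ennreal (?p h s) * indicator A (h(T := s))) \<in> borel_measurable LD"
        using measurable_compose[OF measurable_Pair1'[OF h] joint[OF A]] by simp
      have "ennreal (?f h) * emeasure (?K h) A = ennreal (?f h) * (\<integral>\<^sup>+s. ennreal (?p h s) * indicator A (h(T := s)) \<partial>LD)"
        by (simp add: Kemeas[OF h A])
      also have "\<dots> = (\<integral>\<^sup>+s. ennreal (?f h) * (ennreal (?p h s) * indicator A (h(T := s))) \<partial>LD)"
        using inner_m by (rule nn_integral_cmult[symmetric])
      also have "\<dots> = (\<integral>\<^sup>+s. ennreal (HD grp C sig \<beta> q grad b (Suc T) D (h(T := s))) * indicator A (h(T := s)) \<partial>LD)"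
      proof (rule nn_integral_cong)
        fix s
        have "ennreal (?f h) * ennreal (?p h s) = ennreal (HD grp C sig \<beta> q grad b (Suc T) D (h(T := s)))"
        proof -
          have hp: "0 \<le> ?f h" using HD_pos[where C=C and sig=sig, OF C sig] less_imp_le by blast
          have "ennreal (?f h) * ennreal (?p h s) = ennreal (?f h * ?p h s)"
            using hp by (rule ennreal_mult'[symmetric])
          also have "?f h * ?p h s = HD grp C sig \<beta> q grad b (Suc T) D (h(T := s))"
            by (rule HD_upd[OF h, symmetric])
          finally show ?thesis .
        qed
        then show "ennreal (?f h) * (ennreal (?p h s) * indicator A (h(T := s))) = ennreal (HD grp C sig \<beta> q grad b (Suc T) D (h(T := s))) * indicator A (h(T := s))"
          by (simp add: mult.assoc[symmetric])
      qed
      finally show "ennreal (?f h) * emeasure (?K h) A = (\<integral>\<^sup>+s. ennreal (HD grp C sig \<beta> q grad b (Suc T) D (h(T := s))) * indicator A (h(T := s)) \<partial>LD)" .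
    qed
    also have "\<dots> = (\<integral>\<^sup>+h. ennreal (HD grp C sig \<beta> q grad b (Suc T) D h) * indicator A h \<partial>LH (Suc T))"
      unfolding LH_def lessThan_Suc_insert by (rule LDH.product_nn_integral_insert[symmetric]) (auto intro: gS)
    also have "\<dots> = emeasure (density (LH (Suc T)) (\<lambda>h. ennreal (HD grp C sig \<beta> q grad b (Suc T) D h))) A"
      using AL HDm[of "Suc T"] by (intro emeasure_density[symmetric]) auto
    finally show "emeasure (?M \<bind> ?K) A = emeasure (density (LH (Suc T)) (\<lambda>h. ennreal (HD grp C sig \<beta> q grad b (Suc T) D h))) A" .
  qed
  have prob: "prob_space (?M \<bind> ?K)"
  proof (rule prob_spaceI)
    have sp: "space (?M \<bind> ?K) = space (hspace (Suc T))" using sS by (rule sets_eq_imp_space_eq)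
    have "emeasure (?M \<bind> ?K) (space (hspace (Suc T))) = (\<integral>\<^sup>+h. emeasure (?K h) (space (hspace (Suc T))) \<partial>?M)"
      using ne Kmeas by (rule emeasure_bind) simp
    also have "\<dots> = (\<integral>\<^sup>+h. 1 \<partial>?M)"
    proof (rule nn_integral_cong)
      fix h assume "h \<in> space ?M"
      then have h: "h \<in> space (hspace T)" by (simp add: spM)
      interpret Kh: prob_space "?K h" using Kprob[OF h] .
      have "space (?K h) = space (hspace (Suc T))" by simp
      then show "emeasure (?K h) (space (hspace (Suc T))) = 1" using Kh.emeasure_space_1 by simp
    qed
    also have "\<dots> = 1" using Mprob by (simp add: prob_space.emeasure_space_1)
    finally show "emeasure (?M \<bind> ?K) (space (?M \<bind> ?K)) = 1" by (simp add: sp)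
  qed
  show ?case using eq prob hS by simp
qed

lemma powr_split_aux:
  fixes x y x' y' :: real
  assumes "0 \<le> x" "0 \<le> y" "0 < x'" "0 < y'"
  shows "(x' * y') * ((x * y) / (x' * y')) powr a = (x' * (x / x') powr a) * (y' * (y / y') powr a)"
proof -
  have e: "(x * y) / (x' * y') = (x / x') * (y / y')" by simp
  have "((x / x') * (y / y')) powr a = (x / x') powr a * (y / y') powr a"
    using assms by (intro powr_mult)
  then have "((x * y) / (x' * y')) powr a = (x / x') powr a * (y / y') powr a"
    by (simp only: e)
  then show ?thesis by (simp add: mult_ac)
qed

lemma chain_bound:
  fixes grp :: "'d::finite \<Rightarrow> 'g::finite"
  assumes C: "\<And>g. 0 < C g" and sig: "\<And>t g. 0 < sig t g" and b0: "0 < \<beta>"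
    and q_prob: "\<And>t. q t \<in> {0..1}" and valid: "valid_sgm_bound TYPE('d) eps_sgm"
    and a: "1 < a" and adj: "adjacent D D'"
    and grad_meas: "\<And>t x. (\<lambda>h. grad t h x) \<in> hspace t \<rightarrow>\<^sub>M vspace"
    and b_meas: "\<And>t. b t \<in> hspace t \<rightarrow>\<^sub>M vspace"
  shows "(\<integral>\<^sup>+h. ennreal (HD grp C sig \<beta> q grad b T D' h * (HD grp C sig \<beta> q grad b T D h / HD grp C sig \<beta> q grad b T D' h) powr a) \<partial>(LH T :: (nat \<Rightarrow> 'd \<Rightarrow> real) measure))
     \<le> (\<Prod>t<T. ennreal (exp ((a - 1) * eps_sgm a (q t) (sigma_eff \<beta> (sig t)))))"
proof (induction T)
  case 0
  show ?case unfolding LH_0 HD_def by (simp add: nn_integral_count_space_finite)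
next
  case (Suc T)
  let ?F = "\<lambda>T h. HD grp C sig \<beta> q grad b T D' h * (HD grp C sig \<beta> q grad b T D h / HD grp C sig \<beta> q grad b T D' h) powr a"
  let ?g = "\<lambda>h s. sdens grp C sig \<beta> q grad b T D' h s * (sdens grp C sig \<beta> q grad b T D h s / sdens grp C sig \<beta> q grad b T D' h s) powr a"
  let ?E = "\<lambda>t. ennreal (exp ((a - 1) * eps_sgm a (q t) (sigma_eff \<beta> (sig t))))"
  have HDm: "\<And>T' E. (\<lambda>h. HD grp C sig \<beta> q grad b T' E h) \<in> borel_measurable (LH T' :: (nat \<Rightarrow> 'd \<Rightarrow> real) measure)"
    by (rule HD_meas[where grad=grad and b=b, OF grad_meas b_meas])
  have Fm: "(\<lambda>h. ennreal (?F (Suc T) h)) \<in> borel_measurable (PiM (insert T {..<T}) (\<lambda>_. LD :: ('d \<Rightarrow> real) measure))"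
    using HDm[of "Suc T" D] HDm[of "Suc T" D'] unfolding LH_Suc by measurable
  have pos: "\<And>T E h. 0 < HD grp C sig \<beta> q grad b T E h"
    by (rule HD_pos[where C=C and sig=sig, OF C sig])
  have spos: "\<And>E h s. 0 < sdens grp C sig \<beta> q grad b T E h s"
    by (rule sdens_pos[where C=C and sig=sig, OF C sig])
  have "(\<integral>\<^sup>+h. ennreal (?F (Suc T) h) \<partial>(LH (Suc T) :: (nat \<Rightarrow> 'd \<Rightarrow> real) measure))
      = (\<integral>\<^sup>+h. (\<integral>\<^sup>+s. ennreal (?F (Suc T) (h(T := s))) \<partial>LD) \<partial>LH T)"
    unfolding LH_def lessThan_Suc_insert by (rule LDH.product_nn_integral_insert) (auto intro: Fm)
  also have "\<dots> = (\<integral>\<^sup>+h. ennreal (?F T h) * (\<integral>\<^sup>+s. ennreal (?g h s) \<partial>LD) \<partial>LH T)"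
  proof (rule nn_integral_cong)
    fix h :: "nat \<Rightarrow> 'd \<Rightarrow> real" assume "h \<in> space (LH T)"
    then have h: "h \<in> space (hspace T)" by (simp add: space_LH)
    have gm: "(\<lambda>s. ennreal (?g h s)) \<in> borel_measurable LD"
    proof -
      have m1: "\<And>E. (\<lambda>s. sdens grp C sig \<beta> q grad b T E h s) \<in> borel_measurable LD"
        unfolding sdens_def by (rule mixdens_meas)
      show ?thesis using m1[of D] m1[of D'] by measurable
    qed
    have "(\<integral>\<^sup>+s. ennreal (?F (Suc T) (h(T := s))) \<partial>LD) = (\<integral>\<^sup>+s. ennreal (?F T h) * ennreal (?g h s) \<partial>LD)"
    proof (rule nn_integral_cong)
      fix s
      have "?F (Suc T) (h(T := s)) = ?F T h * ?g h s"
        unfolding HD_upd[OF h]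
        by (rule powr_split_aux) (use pos spos in \<open>auto intro: less_imp_le\<close>)
      moreover have "0 \<le> ?F T h" by (intro mult_nonneg_nonneg powr_ge_zero less_imp_le pos)
      ultimately show "ennreal (?F (Suc T) (h(T := s))) = ennreal (?F T h) * ennreal (?g h s)"
        by (simp add: ennreal_mult')
    qed
    also have "\<dots> = ennreal (?F T h) * (\<integral>\<^sup>+s. ennreal (?g h s) \<partial>LD)"
      using gm by (rule nn_integral_cmult)
    finally show "(\<integral>\<^sup>+s. ennreal (?F (Suc T) (h(T := s))) \<partial>LD) = ennreal (?F T h) * (\<integral>\<^sup>+s. ennreal (?g h s) \<partial>LD)" .
  qed
  also have "\<dots> \<le> (\<integral>\<^sup>+h. ennreal (?F T h) * ?E T \<partial>LH T)"
  proof (rule nn_integral_mono)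
    fix h :: "nat \<Rightarrow> 'd \<Rightarrow> real"
    have "(\<integral>\<^sup>+s. ennreal (?g h s) \<partial>LD) \<le> ?E T"
      by (rule step_renyi[OF C sig b0 q_prob valid a adj])
    then show "ennreal (?F T h) * (\<integral>\<^sup>+s. ennreal (?g h s) \<partial>LD) \<le> ennreal (?F T h) * ?E T"
      by (rule mult_left_mono) simp
  qed
  also have "\<dots> = (\<integral>\<^sup>+h. ennreal (?F T h) \<partial>LH T) * ?E T"
  proof (rule nn_integral_multc)
    have m1: "(\<lambda>h. HD grp C sig \<beta> q grad b T D h / HD grp C sig \<beta> q grad b T D' h) \<in> borel_measurable (LH T)"
      using HDm[of T D] HDm[of T D'] by (rule borel_measurable_divide)
    have m2: "(\<lambda>h. (HD grp C sig \<beta> q grad b T D h / HD grp C sig \<beta> q grad b T D' h) powr a) \<in> borel_measurable (LH T)"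
      using m1 by (rule powr_real_measurable) simp
    have m3: "(\<lambda>h. ?F T h) \<in> borel_measurable (LH T)"
      using HDm[of T D'] m2 by (rule borel_measurable_times)
    show "(\<lambda>h. ennreal (?F T h)) \<in> borel_measurable (LH T)"
      using m3 by (rule measurable_compose[OF _ measurable_ennreal])
  qed
  also have "\<dots> \<le> (\<Prod>t<T. ?E t) * ?E T"
    using Suc.IH by (rule mult_right_mono) simp
  also have "\<dots> = (\<Prod>t<Suc T. ?E t)" by (simp add: prod.lessThan_Suc)
  finally show ?case .
qed

lemma prod_exp_ennreal:
  "(\<Prod>t<(T::nat). ennreal (exp ((a - 1) * e t))) = ennreal (exp ((a - 1) * (\<Sum>t<T. e t)))"
proof -
  have "(\<Prod>t<T. ennreal (exp ((a - 1) * e t))) = ennreal (\<Prod>t<T. exp ((a - 1) * e t))"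
    by (rule prod_ennreal) simp
  also have "(\<Prod>t<T. exp ((a - 1) * e t)) = exp (\<Sum>t<T. (a - 1) * e t)"
    by (simp add: exp_sum)
  also have "(\<Sum>t<T. (a - 1) * e t) = (a - 1) * (\<Sum>t<T. e t)"
    by (simp add: sum_distrib_left)
  finally show ?thesis .
qed

theorem theoremB3:
  fixes grp :: "'d::finite \<Rightarrow> 'g::finite"
    and C :: "'g \<Rightarrow> real" and sig :: "nat \<Rightarrow> 'g \<Rightarrow> real"
    and \<beta> :: real and q :: "nat \<Rightarrow> real" and T :: nat
    and grad :: "nat \<Rightarrow> (nat \<Rightarrow> 'd \<Rightarrow> real) \<Rightarrow> 'x \<Rightarrow> ('d \<Rightarrow> real)"
    and b :: "nat \<Rightarrow> (nat \<Rightarrow> 'd \<Rightarrow> real) \<Rightarrow> ('d \<Rightarrow> real)"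
    and eps_sgm :: "real \<Rightarrow> real \<Rightarrow> real \<Rightarrow> real"
  assumes C_pos: "\<And>g. C g > 0"
    and sig_pos: "\<And>t g. sig t g > 0"
    and beta: "0 < \<beta>" "\<beta> \<le> 1"
    and q_prob: "\<And>t. q t \<in> {0..1}"
    and grad_meas: "\<And>t x. (\<lambda>h. grad t h x) \<in> hspace t \<rightarrow>\<^sub>M vspace"
    and b_meas: "\<And>t. b t \<in> hspace t \<rightarrow>\<^sub>M vspace"
    and valid: "valid_sgm_bound TYPE('d) eps_sgm"
  shows "\<forall>a>1. rdp a (\<Sum>t<T. eps_sgm a (q t) (sigma_eff \<beta> (sig t)))
                 (sma_hist grp C sig \<beta> q grad b T)
       \<and> (\<forall>\<delta>. 0 < \<delta> \<and> \<delta> < 1 \<longrightarrow>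
           dp (INF a\<in>{1<..}. (\<Sum>t<T. eps_sgm a (q t) (sigma_eff \<beta> (sig t))) + ln (1 / \<delta>) / (a - 1))
              \<delta> (sma_hist grp C sig \<beta> q grad b T))"
proof -
  let ?M = "sma_hist grp C sig \<beta> q grad b T"
  let ?e = "\<lambda>a. (\<Sum>t<T. eps_sgm a (q t) (sigma_eff \<beta> (sig t)))"
  have HDdef: "\<And>D. ?M D = density (LH T) (\<lambda>h. ennreal (HD grp C sig \<beta> q grad b T D h)) \<and> prob_space (?M D)"
    by (rule hist_density[where grp=grp and C=C and sig=sig and grad=grad and b=b, OF C_pos sig_pos grad_meas b_meas])
  have Mprob: "\<And>D. prob_space (?M D)" using HDdef by blast
  have Meq: "\<And>D. ?M D = density (LH T) (\<lambda>h. ennreal (HD grp C sig \<beta> q grad b T D h))" using HDdef by blast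
  have HDm: "\<And>D. (\<lambda>h. HD grp C sig \<beta> q grad b T D h) \<in> borel_measurable (LH T :: (nat \<Rightarrow> 'd \<Rightarrow> real) measure)"
    by (rule HD_meas[where grad=grad and b=b, OF grad_meas b_meas])
  have pos: "\<And>D h. 0 < HD grp C sig \<beta> q grad b T D h"
    by (rule HD_pos[where C=C and sig=sig, OF C_pos sig_pos])
  have RDP: "\<And>a D D'. 1 < a \<Longrightarrow> adjacent D D' \<Longrightarrow> renyi_div a (?M D) (?M D') \<le> ereal (?e a)"
  proof -
    fix a :: real and D D' :: "'x list" assume a: "1 < a" and adj: "adjacent D D'"
    let ?f = "\<lambda>h. HD grp C sig \<beta> q grad b T D h" and ?g = "\<lambda>h. HD grp C sig \<beta> q grad b T D' h"
    have Qp: "prob_space (density (LH T) (\<lambda>h. ennreal (?g h)))" using Mprob[of D'] Meq[of D'] by simp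
    have f0: "\<And>h. 0 \<le> ?f h" using pos less_imp_le by blast
    have g0: "\<And>h. 0 < ?g h" using pos by blast
    note RI = renyi_int_density[of ?f "LH T" ?g, OF HDm HDm f0 g0 Qp]
    have bound: "renyi_int a (density (LH T) (\<lambda>h. ennreal (?f h))) (density (LH T) (\<lambda>h. ennreal (?g h))) \<le> ennreal (exp ((a - 1) * ?e a))"
      unfolding RI(2)
      using chain_bound[OF C_pos sig_pos beta(1) q_prob valid a adj grad_meas b_meas, of T]
      by (simp add: prod_exp_ennreal)
    have nz: "renyi_int a (density (LH T) (\<lambda>h. ennreal (?f h))) (density (LH T) (\<lambda>h. ennreal (?g h))) \<noteq> 0"
    proof
      assume "renyi_int a (density (LH T) (\<lambda>h. ennreal (?f h))) (density (LH T) (\<lambda>h. ennreal (?g h))) = 0"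
      then have z: "(\<integral>\<^sup>+h. ennreal (?g h * (?f h / ?g h) powr a) \<partial>LH T) = 0" unfolding RI(2) .
      have im: "(\<lambda>h. ennreal (?g h * (?f h / ?g h) powr a)) \<in> borel_measurable (LH T)"
      proof -
        have m1: "(\<lambda>h. ?f h / ?g h) \<in> borel_measurable (LH T)"
          using HDm[of D] HDm[of D'] by (rule borel_measurable_divide)
        have m2: "(\<lambda>h. (?f h / ?g h) powr a) \<in> borel_measurable (LH T)"
          using m1 by (rule powr_real_measurable) simp
        have m3: "(\<lambda>h. ?g h * (?f h / ?g h) powr a) \<in> borel_measurable (LH T)"
          using HDm[of D'] m2 by (rule borel_measurable_times)
        show ?thesis using m3 by (rule measurable_compose[OF _ measurable_ennreal])
      qed
      have "AE h in LH T. ennreal (?g h * (?f h / ?g h) powr a) = 0"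
        using z im by (simp add: nn_integral_0_iff_AE)
      moreover have "\<And>h. ennreal (?g h * (?f h / ?g h) powr a) \<noteq> 0"
      proof -
        fix h
        have "0 < ?f h / ?g h" using pos by (intro divide_pos_pos) auto
        then have "0 < ?g h * (?f h / ?g h) powr a" using g0 by (intro mult_pos_pos) auto
        then show "ennreal (?g h * (?f h / ?g h) powr a) \<noteq> 0" by (metis ennreal_eq_0_iff not_le)
      qed
      ultimately have F: "AE h in (LH T :: (nat \<Rightarrow> 'd \<Rightarrow> real) measure). False" by simp
      have "emeasure (density (LH T) (\<lambda>h. ennreal (?g h))) (space (LH T)) = (\<integral>\<^sup>+h. ennreal (?g h) * indicator (space (LH T)) h \<partial>LH T)"
        using HDm[of D'] by (intro emeasure_density) auto
      also have "\<dots> = (\<integral>\<^sup>+h. 0 \<partial>(LH T :: (nat \<Rightarrow> 'd \<Rightarrow> real) measure))"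
        using F by (intro nn_integral_cong_AE) (auto elim: eventually_mono)
      finally have "emeasure (density (LH T) (\<lambda>h. ennreal (?g h))) (space (LH T)) = 0" by simp
      moreover have "emeasure (density (LH T) (\<lambda>h. ennreal (?g h))) (space (LH T)) = 1"
        using prob_space.emeasure_space_1[OF Qp] by simp
      ultimately show False by simp
    qed
    have "renyi_div a (density (LH T) (\<lambda>h. ennreal (?f h))) (density (LH T) (\<lambda>h. ennreal (?g h))) \<le> ereal (?e a)"
      by (rule renyi_bound_I[OF _ RI(1) bound nz a]) simp
    then show "renyi_div a (?M D) (?M D') \<le> ereal (?e a)" by (simp only: Meq)
  qed
  have DP: "\<And>\<delta>. 0 < \<delta> \<and> \<delta> < 1 \<Longrightarrow> dp (INF a\<in>{1<..}. ?e a + ln (1 / \<delta>) / (a - 1)) \<delta> ?M"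
  proof -
    fix \<delta> :: real assume d: "0 < \<delta> \<and> \<delta> < 1"
    show "dp (INF a\<in>{1<..}. ?e a + ln (1 / \<delta>) / (a - 1)) \<delta> ?M"
      unfolding dp_def
    proof (intro allI impI ballI)
      fix D D' :: "'x list" and A assume adj: "adjacent D D'" and A: "A \<in> sets (?M D)"
      let ?X = "measure (?M D) A" and ?Y = "measure (?M D') A"
      let ?f = "\<lambda>a. ?e a + ln (1 / \<delta>) / (a - 1)"
      have each: "\<And>a. a \<in> {1<..} \<Longrightarrow> ?X \<le> exp (?f a) * ?Y + \<delta>"
      proof -
        fix a :: real assume "a \<in> {1<..}"
        then have a: "1 < a" by simp
        show "?X \<le> exp (?f a) * ?Y + \<delta>"
          using rdp_to_dp[OF Mprob Mprob RDP[OF a adj] a _ A] d by simp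
      qed
      have Y0: "0 \<le> ?Y" by simp
      show "?X \<le> exp (INF a\<in>{1<..}. ?f a) * ?Y + \<delta>"
      proof (cases "?X \<le> \<delta>")
        case True
        then show ?thesis using Y0 by (smt (verit) exp_gt_zero mult_nonneg_nonneg)
      next
        case False
        then have Xd: "0 < ?X - \<delta>" by simp
        have e2: "?X - \<delta> \<le> exp (?f 2) * ?Y" using each[of 2] by simp
        have Ypos: "0 < ?Y"
        proof (rule ccontr)
          assume "\<not> 0 < ?Y"
          then have "?Y = 0" using Y0 by simp
          then show False using e2 Xd by simp
        qed
        have lb: "\<And>a. a \<in> {1<..} \<Longrightarrow> ln ((?X - \<delta>) / ?Y) \<le> ?f a"
        proof -
          fix a :: real assume a: "a \<in> {1<..}"
          have "?X - \<delta> \<le> exp (?f a) * ?Y" using each[OF a] by simp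
          then have "(?X - \<delta>) / ?Y \<le> exp (?f a)" using Ypos by (simp add: pos_divide_le_eq)
          moreover have "0 < (?X - \<delta>) / ?Y" using Xd Ypos by simp
          ultimately have "ln ((?X - \<delta>) / ?Y) \<le> ln (exp (?f a))" by (subst ln_le_cancel_iff) auto
          then show "ln ((?X - \<delta>) / ?Y) \<le> ?f a" by simp
        qed
        have "ln ((?X - \<delta>) / ?Y) \<le> (INF a\<in>{1<..}. ?f a)"
          by (rule cINF_greatest) (use lb in auto)
        then have "exp (ln ((?X - \<delta>) / ?Y)) \<le> exp (INF a\<in>{1<..}. ?f a)" by simp
        then have "(?X - \<delta>) / ?Y \<le> exp (INF a\<in>{1<..}. ?f a)" using Xd Ypos by simp
        then have "?X - \<delta> \<le> exp (INF a\<in>{1<..}. ?f a) * ?Y" using Ypos by (simp add: pos_divide_le_eq)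
        then show ?thesis by simp
      qed
    qed
  qed
  show ?thesis using RDP DP unfolding rdp_def by blast
qed


end
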